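(* Let $(G,k)$ be an instance of PITVD and let $P=(v_1,v_2,\dots,v_\ell)$ be a degree-2-path in $G$ that is not a degree-2-tail, with $\ell\ge5$. Let $Z=\{v_3,\dots,v_{\ell-2}\}$ and let $G'$ be obtained from $G$ by deleting all vertices of $Z$ and adding the edge $v_2v_{\ell-1}$. Then $(G,k)$ is a yes-instance of PITVD if and only if $(G',k)$ is a yes-instance of PITVD.
   Context: PITVD: the input is an undirected multigraph $G$ (no self-loops) and an integer $k$; the question is whether there exists $X\subseteq V(G)$ with $|X|\le k$ such that $G-X$ is a simple graph and every connected component of $G-X$ is a proper interval graph or a tree. A path $(v_1,\dots,v_\ell)$ (distinct vertices, consecutive ones adjacent) is a degree-2-path if every internal vertex has degree exactly $2$ in $G$; it is a degree-2-tail if $d_G(v_1)>2$ and $d_G(v_\ell)=1$. *)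

theory Defs
  imports Main "HOL.Real"
begin

text \<open>A finite undirected multigraph without self-loops: a finite vertex set V and an
  edge-multiplicity function m (m u v = number of parallel edges between u and v).\<close>
definition multigraph :: "'a set \<Rightarrow> ('a \<Rightarrow> 'a \<Rightarrow> nat) \<Rightarrow> bool" where
  "multigraph V m \<longleftrightarrow> finite V \<and> (\<forall>u. m u u = 0) \<and> (\<forall>u v. m u v = m v u)
     \<and> (\<forall>u v. 0 < m u v \<longrightarrow> u \<in> V \<and> v \<in> V)"

definition deg :: "'a set \<Rightarrow> ('a \<Rightarrow> 'a \<Rightarrow> nat) \<Rightarrow> 'a \<Rightarrow> nat" where
  "deg V m v = (\<Sum>u\<in>V. m v u)"

definition deg2_path :: "'a set \<Rightarrow> ('a \<Rightarrow> 'a \<Rightarrow> nat) \<Rightarrow> 'a list \<Rightarrow> bool" where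
  "deg2_path V m P \<longleftrightarrow> P \<noteq> [] \<and> distinct P \<and> set P \<subseteq> V
     \<and> (\<forall>i. Suc i < length P \<longrightarrow> 0 < m (P ! i) (P ! Suc i))
     \<and> (\<forall>i. 0 < i \<and> Suc i < length P \<longrightarrow> deg V m (P ! i) = 2)"

definition deg2_tail :: "'a set \<Rightarrow> ('a \<Rightarrow> 'a \<Rightarrow> nat) \<Rightarrow> 'a list \<Rightarrow> bool" where
  "deg2_tail V m P \<longleftrightarrow> deg2_path V m P \<and> deg V m (hd P) > 2 \<and> deg V m (last P) = 1"

text \<open>Simple graphs on a vertex set S with adjacency relation E (only used for u, v in S).\<close>
definition reach :: "'a set \<Rightarrow> ('a \<Rightarrow> 'a \<Rightarrow> bool) \<Rightarrow> 'a \<Rightarrow> 'a \<Rightarrow> bool" where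
  "reach S E = (\<lambda>x y. x \<in> S \<and> y \<in> S \<and> E x y)\<^sup>*\<^sup>*"

definition component :: "'a set \<Rightarrow> ('a \<Rightarrow> 'a \<Rightarrow> bool) \<Rightarrow> 'a \<Rightarrow> 'a set" where
  "component S E v = {u \<in> S. reach S E v u}"

definition connected_graph :: "'a set \<Rightarrow> ('a \<Rightarrow> 'a \<Rightarrow> bool) \<Rightarrow> bool" where
  "connected_graph S E \<longleftrightarrow> S \<noteq> {} \<and> (\<forall>u\<in>S. \<forall>v\<in>S. reach S E u v)"

definition is_cycle :: "'a set \<Rightarrow> ('a \<Rightarrow> 'a \<Rightarrow> bool) \<Rightarrow> 'a list \<Rightarrow> bool" where
  "is_cycle S E cs \<longleftrightarrow> 3 \<le> length cs \<and> distinct cs \<and> set cs \<subseteq> S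
     \<and> (\<forall>i. Suc i < length cs \<longrightarrow> E (cs ! i) (cs ! Suc i)) \<and> E (last cs) (hd cs)"

definition is_tree :: "'a set \<Rightarrow> ('a \<Rightarrow> 'a \<Rightarrow> bool) \<Rightarrow> bool" where
  "is_tree S E \<longleftrightarrow> connected_graph S E \<and> \<not> (\<exists>cs. is_cycle S E cs)"

definition proper_interval :: "'a set \<Rightarrow> ('a \<Rightarrow> 'a \<Rightarrow> bool) \<Rightarrow> bool" where
  "proper_interval S E \<longleftrightarrow> (\<exists>l r :: 'a \<Rightarrow> real.
     (\<forall>v\<in>S. l v \<le> r v)
     \<and> (\<forall>u\<in>S. \<forall>v\<in>S. \<not> (l u \<le> l v \<and> r v \<le> r u \<and> (l u < l v \<or> r v < r u)))
     \<and> (\<forall>u\<in>S. \<forall>v\<in>S. u \<noteq> v \<longrightarrow> (E u v \<longleftrightarrow> l u \<le> r v \<and> l v \<le> r u)))"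

definition pitvd :: "'a set \<Rightarrow> ('a \<Rightarrow> 'a \<Rightarrow> nat) \<Rightarrow> int \<Rightarrow> bool" where
  "pitvd V m k \<longleftrightarrow> (\<exists>X \<subseteq> V. int (card X) \<le> k
     \<and> (\<forall>u\<in>V - X. \<forall>v\<in>V - X. m u v \<le> 1)
     \<and> (\<forall>v\<in>V - X. proper_interval (component (V - X) (\<lambda>x y. 0 < m x y) v) (\<lambda>x y. 0 < m x y)
                  \<or> is_tree (component (V - X) (\<lambda>x y. 0 < m x y) v) (\<lambda>x y. 0 < m x y)))"

definition reduce_mult :: "('a \<Rightarrow> 'a \<Rightarrow> nat) \<Rightarrow> 'a set \<Rightarrow> 'a \<Rightarrow> 'a \<Rightarrow> 'a \<Rightarrow> 'a \<Rightarrow> nat" where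
  "reduce_mult m Z a b = (\<lambda>u v. if u \<in> Z \<or> v \<in> Z then 0
      else m u v + (if (u = a \<and> v = b) \<or> (u = b \<and> v = a) then 1 else 0))"

end

theory Submission
  imports Defs
begin


definition symE :: "('a \<Rightarrow> 'a \<Rightarrow> bool) \<Rightarrow> bool" where
  "symE E \<longleftrightarrow> (\<forall>x y. E x y = E y x) \<and> (\<forall>x. \<not> E x x)"

lemma reach_refl[simp]: "reach S E x x"
  by (simp add: reach_def)

lemma reach_step: "reach S E x y \<Longrightarrow> y \<in> S \<Longrightarrow> z \<in> S \<Longrightarrow> E y z \<Longrightarrow> reach S E x z"
  unfolding reach_def by (rule rtranclp.rtrancl_into_rtrancl) auto

lemma reach_edge: "y \<in> S \<Longrightarrow> z \<in> S \<Longrightarrow> E y z \<Longrightarrow> reach S E y z"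
  using reach_step[of S E y y z] by simp

lemma reach_trans: "reach S E x y \<Longrightarrow> reach S E y z \<Longrightarrow> reach S E x z"
  unfolding reach_def by (rule rtranclp_trans)

lemma reach_sym: assumes "symE E" "reach S E x y" shows "reach S E y x"
proof -
  have "symp (\<lambda>x y. x \<in> S \<and> y \<in> S \<and> E x y)"
    using assms(1) unfolding symE_def symp_def by auto
  then show ?thesis using assms(2) unfolding reach_def
    by (meson symp_rtranclp sympD)
qed

lemma reach_mem: "reach S E x y \<Longrightarrow> x \<noteq> y \<Longrightarrow> x \<in> S \<and> y \<in> S"
  unfolding reach_def
  by (induction rule: rtranclp_induct) auto

lemma reach_induct[consumes 1, case_names refl step]:
  assumes "reach S E x y" "P x"
    "\<And>y z. reach S E x y \<Longrightarrow> P y \<Longrightarrow> y \<in> S \<Longrightarrow> z \<in> S \<Longrightarrow> E y z \<Longrightarrow> P z"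
  shows "P y"
  using assms(1) unfolding reach_def
proof (induction rule: rtranclp_induct)
  case base then show ?case using assms(2) by simp
next
  case (step y z) then show ?case using assms(3)[of y z] unfolding reach_def by auto
qed

lemma reach_mono:
  assumes "reach S1 E1 x y" "S1 \<subseteq> S2" "\<forall>u\<in>S1. \<forall>v\<in>S1. E1 u v \<longrightarrow> E2 u v"
  shows "reach S2 E2 x y"
  using assms(1)
proof (induction rule: reach_induct)
  case refl then show ?case by simp
next
  case (step y z) then show ?case using assms by (meson reach_step subsetD)
qed

lemma reach_proj:
  assumes "reach S E x y"
    "\<And>u v. u \<in> S \<Longrightarrow> v \<in> S \<Longrightarrow> E u v \<Longrightarrow> reach S' E' (\<pi> u) (\<pi> v)"
  shows "reach S' E' (\<pi> x) (\<pi> y)"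
  using assms(1)
proof (induction rule: reach_induct)
  case refl then show ?case by simp
next
  case (step y z) then show ?case using assms(2) reach_trans by metis
qed

lemma component_sub: "component S E v \<subseteq> S"
  unfolding component_def by auto

lemma reach_in_component:
  assumes "reach S E v u" "v \<in> S"
  shows "reach (component S E v) E v u"
  using assms(1)
proof (induction rule: reach_induct)
  case refl then show ?case by simp
next
  case (step y z)
  have "reach S E v z" using step reach_step by metis
  then have "z \<in> component S E v" using step unfolding component_def by auto
  moreover have "y \<in> component S E v" using step unfolding component_def by auto
  ultimately show ?case using step reach_step by metis
qed

lemma component_connected:
  assumes "symE E" "v \<in> S"
  shows "connected_graph (component S E v) E"
  unfolding connected_graph_def
proof (intro conjI ballI)
  show "component S E v \<noteq> {}" using assms unfolding component_def by auto
next
  fix u w assume u: "u \<in> component S E v" and w: "w \<in> component S E v"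
  have "reach (component S E v) E v u" "reach (component S E v) E v w"
    using u w assms reach_in_component unfolding component_def by auto
  then show "reach (component S E v) E u w"
    using reach_sym[OF assms(1)] reach_trans by metis
qed

lemma component_self: "v \<in> S \<Longrightarrow> v \<in> component S E v"
  unfolding component_def by simp

lemma component_eq:
  assumes "symE E" "u \<in> component S E v"
  shows "component S E u = component S E v"
proof -
  have r: "reach S E v u" using assms unfolding component_def by auto
  then have r2: "reach S E u v" using reach_sym assms by metis
  show ?thesis unfolding component_def
  proof (intro Collect_cong conj_cong refl iffI)
    fix w assume "reach S E u w" then show "reach S E v w" using r reach_trans by metis
  next
    fix w assume "reach S E v w" then show "reach S E u w" using r2 reach_trans by metis
  qed
qed



definition core :: "'a set \<Rightarrow> ('a \<Rightarrow> 'a \<Rightarrow> bool) \<Rightarrow> bool" where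
  "core T E \<longleftrightarrow> T \<noteq> {} \<and> (\<forall>x\<in>T. \<exists>y\<in>T. \<exists>z\<in>T. y \<noteq> z \<and> E x y \<and> E x z)"

definition has_core :: "'a set \<Rightarrow> ('a \<Rightarrow> 'a \<Rightarrow> bool) \<Rightarrow> bool" where
  "has_core C E \<longleftrightarrow> (\<exists>T\<subseteq>C. core T E)"

lemma cycle_core:
  assumes "is_cycle C E cs" "symE E"
  shows "has_core C E"
proof -
  let ?n = "length cs"
  have n3: "3 \<le> ?n" and dist: "distinct cs" and sub: "set cs \<subseteq> C"
    and cons: "\<And>i. Suc i < ?n \<Longrightarrow> E (cs ! i) (cs ! Suc i)" and wrap: "E (last cs) (hd cs)"
    using assms(1) unfolding is_cycle_def by auto
  have sym: "\<And>x y. E x y = E y x" using assms(2) unfolding symE_def by auto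
  have ne: "cs \<noteq> []" using n3 by auto
  have lastn: "last cs = cs ! (?n - 1)" using ne by (simp add: last_conv_nth)
  have hd0: "hd cs = cs ! 0" using ne by (simp add: hd_conv_nth)
  have "core (set cs) E"
    unfolding core_def
  proof (intro conjI ballI)
    show "set cs \<noteq> {}" using ne by simp
  next
    fix x assume "x \<in> set cs"
    then obtain i where i: "i < ?n" "x = cs ! i" by (metis in_set_conv_nth)
    define j1 where "j1 = (if Suc i < ?n then Suc i else 0)"
    define j2 where "j2 = (if 0 < i then i - 1 else ?n - 1)"
    have j1n: "j1 < ?n" and j2n: "j2 < ?n" using i n3 unfolding j1_def j2_def by auto
    have "j1 \<noteq> j2" using i n3 unfolding j1_def j2_def by auto
    then have d: "cs ! j1 \<noteq> cs ! j2" using dist j1n j2n by (simp add: nth_eq_iff_index_eq)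
    have e1: "E x (cs ! j1)"
    proof (cases "Suc i < ?n")
      case True then show ?thesis using cons i unfolding j1_def by auto
    next
      case False then have "i = ?n - 1" using i by auto
      then show ?thesis using wrap i lastn hd0 False unfolding j1_def by auto
    qed
    have e2: "E x (cs ! j2)"
    proof (cases "0 < i")
      case True
      then have "E (cs ! (i - 1)) (cs ! Suc (i - 1))" using cons[of "i - 1"] i by simp
      moreover have "Suc (i - 1) = i" using True by auto
      ultimately show ?thesis using True i sym unfolding j2_def by auto
    next
      case False then have "i = 0" by auto
      then show ?thesis using wrap i lastn hd0 sym False unfolding j2_def by auto
    qed
    show "\<exists>y\<in>set cs. \<exists>z\<in>set cs. y \<noteq> z \<and> E x y \<and> E x z"
      using d e1 e2 j1n j2n by (meson nth_mem)
  qed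
  then show ?thesis unfolding has_core_def using sub by blast
qed

definition pth :: "'a set \<Rightarrow> ('a \<Rightarrow> 'a \<Rightarrow> bool) \<Rightarrow> 'a list \<Rightarrow> bool" where
  "pth T E p \<longleftrightarrow> p \<noteq> [] \<and> distinct p \<and> set p \<subseteq> T \<and> (\<forall>i. Suc i < length p \<longrightarrow> E (p ! i) (p ! Suc i))"

lemma pth_snoc:
  assumes "pth T E p" "w \<in> T" "w \<notin> set p" "E (last p) w"
  shows "pth T E (p @ [w])"
  unfolding pth_def
proof (intro conjI allI impI)
  show "p @ [w] \<noteq> []" by simp
  show "distinct (p @ [w])" using assms unfolding pth_def by auto
  show "set (p @ [w]) \<subseteq> T" using assms unfolding pth_def by auto
next
  fix i assume i: "Suc i < length (p @ [w])"
  have ne: "p \<noteq> []" using assms unfolding pth_def by auto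
  show "E ((p @ [w]) ! i) ((p @ [w]) ! Suc i)"
  proof (cases "Suc i < length p")
    case True then show ?thesis using assms(1) unfolding pth_def by (simp add: nth_append)
  next
    case False
    then have "i = length p - 1" "Suc i = length p" using i by auto
    then show ?thesis using assms(4) ne by (simp add: nth_append last_conv_nth)
  qed
qed

lemma core_cycle:
  assumes "finite C" "symE E" "T \<subseteq> C" "core T E"
  shows "\<exists>cs. is_cycle C E cs"
proof -
  have irr: "\<And>x. \<not> E x x" and sym: "\<And>x y. E x y = E y x" using assms(2) unfolding symE_def by auto
  have fT: "finite T" using assms(1,3) finite_subset by auto
  obtain x0 where x0: "x0 \<in> T" using assms(4) unfolding core_def by auto
  define Q where "Q = (\<lambda>n. \<exists>p. pth T E p \<and> length p = n)"
  have Q1: "Q 1" unfolding Q_def using x0 by (intro exI[of _ "[x0]"]) (simp add: pth_def)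
  have Qb: "\<forall>n. Q n \<longrightarrow> n \<le> card T"
  proof (intro allI impI)
    fix n assume "Q n"
    then obtain p where p: "pth T E p" "length p = n" unfolding Q_def by auto
    then have "card (set p) = n" using distinct_card unfolding pth_def by auto
    then show "n \<le> card T" using p fT card_mono unfolding pth_def by metis
  qed
  obtain n where n: "Q n" "\<forall>m. Q m \<longrightarrow> m \<le> n" using Nat.ex_has_greatest_nat[OF Q1 Qb] by auto
  obtain p where p: "pth T E p" "length p = n" using n unfolding Q_def by auto
  have ne: "p \<noteq> []" using p unfolding pth_def by auto
  define x where "x = last p"
  have xT: "x \<in> T" using p ne unfolding x_def pth_def by auto
  have nbr_in: "\<And>w. w \<in> T \<Longrightarrow> E x w \<Longrightarrow> w \<in> set p"
  proof (rule ccontr)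
    fix w assume w: "w \<in> T" "E x w" "w \<notin> set p"
    then have "pth T E (p @ [w])" using pth_snoc p x_def by metis
    then have "Q (Suc n)" unfolding Q_def using p by (intro exI[of _ "p @ [w]"]) simp
    then show False using n by auto
  qed
  obtain y z where yz: "y \<in> T" "z \<in> T" "y \<noteq> z" "E x y" "E x z"
    using assms(4) xT unfolding core_def by blast
  have xn: "x = p ! (n - 1)" using ne p unfolding x_def by (simp add: last_conv_nth)
  have n2: "2 \<le> n"
  proof (rule ccontr)
    assume "\<not> 2 \<le> n"
    then have "n = 1" using ne p by (cases n) auto
    then have "set p = {x}" using p ne unfolding x_def by (cases p) auto
    then show False using nbr_in yz irr by auto
  qed
  obtain w where w: "w \<in> T" "E x w" "w \<noteq> p ! (n - 2)"
    using yz by metis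
  have "w \<in> set p" using nbr_in w by auto
  then obtain j where j: "j < n" "w = p ! j" using p by (metis in_set_conv_nth)
  have dp: "distinct p" using p unfolding pth_def by auto
  have "j \<noteq> n - 1" using j w xn irr by auto
  moreover have "j \<noteq> n - 2" using j w by auto
  ultimately have j3: "j + 3 \<le> n" using j n2 by auto
  define cs where "cs = drop j p"
  have "is_cycle C E cs"
    unfolding is_cycle_def
  proof (intro conjI allI impI)
    show "3 \<le> length cs" using j3 p unfolding cs_def by auto
    show "distinct cs" using dp unfolding cs_def by auto
    show "set cs \<subseteq> C" using p assms(3) set_drop_subset unfolding cs_def pth_def by fastforce
  next
    fix i assume "Suc i < length cs"
    then have "Suc (j + i) < length p" unfolding cs_def by auto
    then show "E (cs ! i) (cs ! Suc i)" using p unfolding cs_def pth_def by auto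
  next
    have "last cs = x" using j p unfolding cs_def x_def by (simp add: last_drop)
    moreover have "hd cs = w" using j p unfolding cs_def by (simp add: hd_drop_conv_nth)
    ultimately show "E (last cs) (hd cs)" using w by simp
  qed
  then show ?thesis by blast
qed

lemma cycle_iff_core:
  assumes "finite C" "symE E"
  shows "(\<exists>cs. is_cycle C E cs) \<longleftrightarrow> has_core C E"
  using assms cycle_core core_cycle unfolding has_core_def by metis

definition good :: "'a set \<Rightarrow> ('a \<Rightarrow> 'a \<Rightarrow> bool) \<Rightarrow> bool" where
  "good S E \<longleftrightarrow> (\<forall>v\<in>S. proper_interval (component S E v) E \<or> \<not> has_core (component S E v) E)"

lemma tree_comp_iff:
  assumes "finite S" "symE E" "v \<in> S"
  shows "is_tree (component S E v) E \<longleftrightarrow> \<not> has_core (component S E v) E"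
proof -
  have "finite (component S E v)" using assms(1) component_sub finite_subset by metis
  then show ?thesis unfolding is_tree_def
    using component_connected[OF assms(2,3)] cycle_iff_core assms(2) by metis
qed

lemma pitvd_good:
  assumes "finite V" "symE (\<lambda>x y. 0 < m x y)"
  shows "pitvd V m k \<longleftrightarrow> (\<exists>X\<subseteq>V. int (card X) \<le> k \<and> (\<forall>u\<in>V - X. \<forall>v\<in>V - X. m u v \<le> 1)
     \<and> good (V - X) (\<lambda>x y. 0 < m x y))"
proof -
  have "\<And>X v. v \<in> V - X \<Longrightarrow> is_tree (component (V - X) (\<lambda>x y. 0 < m x y) v) (\<lambda>x y. 0 < m x y)
     \<longleftrightarrow> \<not> has_core (component (V - X) (\<lambda>x y. 0 < m x y) v) (\<lambda>x y. 0 < m x y)"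
    using tree_comp_iff[OF _ assms(2)] assms(1) by blast
  then show ?thesis unfolding pitvd_def good_def by simp
qed



lemma PI_mono:
  assumes "proper_interval C E" "C1 \<subseteq> C" "\<forall>u\<in>C1. \<forall>v\<in>C1. E1 u v = E u v"
  shows "proper_interval C1 E1"
proof -
  obtain l r :: "'a \<Rightarrow> real" where lr: "\<forall>v\<in>C. l v \<le> r v"
     "\<forall>u\<in>C. \<forall>v\<in>C. \<not> (l u \<le> l v \<and> r v \<le> r u \<and> (l u < l v \<or> r v < r u))"
     "\<forall>u\<in>C. \<forall>v\<in>C. u \<noteq> v \<longrightarrow> (E u v \<longleftrightarrow> l u \<le> r v \<and> l v \<le> r u)"
    using assms(1) unfolding proper_interval_def by blast
  show ?thesis unfolding proper_interval_def
    apply (rule exI[of _ l], rule exI[of _ r])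
    using lr assms(2,3) by (auto simp: subset_iff)
qed

lemma core_mono:
  assumes "core T E1" "T \<subseteq> S1" "\<forall>u\<in>S1. \<forall>v\<in>S1. E1 u v \<longrightarrow> E2 u v"
  shows "core T E2"
  using assms unfolding core_def by (meson subsetD)

lemma good_her:
  assumes "good S2 E2" "S1 \<subseteq> S2" "\<forall>u\<in>S1. \<forall>v\<in>S1. E1 u v = E2 u v"
  shows "good S1 E1"
  unfolding good_def
proof
  fix v assume v: "v \<in> S1"
  let ?C1 = "component S1 E1 v" and ?C2 = "component S2 E2 v"
  have sub: "?C1 \<subseteq> ?C2"
    unfolding component_def using reach_mono[of S1 E1 v _ S2 E2] assms(2,3) by auto
  have C1S: "?C1 \<subseteq> S1" by (rule component_sub)
  have "proper_interval ?C2 E2 \<or> \<not> has_core ?C2 E2" using assms(1) v assms(2) unfolding good_def by auto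
  then show "proper_interval ?C1 E1 \<or> \<not> has_core ?C1 E1"
  proof
    assume "proper_interval ?C2 E2"
    then have "proper_interval ?C1 E1" using PI_mono sub C1S assms(3) by (metis subsetD)
    then show ?thesis by simp
  next
    assume nc: "\<not> has_core ?C2 E2"
    have "\<not> has_core ?C1 E1"
    proof
      assume "has_core ?C1 E1"
      then obtain T where T: "T \<subseteq> ?C1" "core T E1" unfolding has_core_def by auto
      then have "core T E2" using core_mono[of T E1 S1 E2] C1S assms(3) by blast
      then show False using nc T sub unfolding has_core_def by blast
    qed
    then show ?thesis by simp
  qed
qed

lemma PI_cong:
  assumes "\<forall>u\<in>C. \<forall>v\<in>C. E1 u v = E u v"
  shows "proper_interval C E1 = proper_interval C E"
  using PI_mono[of C E C E1] PI_mono[of C E1 C E] assms by auto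

lemma has_core_cong:
  assumes "\<forall>u\<in>C. \<forall>v\<in>C. E1 u v = E u v"
  shows "has_core C E1 = has_core C E"
proof -
  have "\<And>T. T \<subseteq> C \<Longrightarrow> core T E1 = core T E"
    using core_mono[of _ E1 C E] core_mono[of _ E C E1] assms by blast
  then show ?thesis unfolding has_core_def by blast
qed

lemma comp_insert:
  assumes "c \<notin> S'" "b \<in> S'" "E c b" "symE E" "w \<in> S'"
    "\<forall>x\<in>S'. \<forall>y\<in>S'. reach (insert c S') E x y \<longleftrightarrow> reach S' E' x y"
  shows "component (insert c S') E w =
     (if b \<in> component S' E' w then insert c (component S' E' w) else component S' E' w)"
proof -
  have sym: "\<And>x y. E x y = E y x" using assms(4) unfolding symE_def by auto
  have bi: "b \<in> insert c S'" using assms(2) by simp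
  have ci: "c \<in> insert c S'" by simp
  have ebc: "E b c" using assms(3) sym by simp
  have "reach (insert c S') E w c \<longleftrightarrow> reach (insert c S') E w b"
  proof
    assume "reach (insert c S') E w c"
    then show "reach (insert c S') E w b" using reach_step[of "insert c S'" E w c b] ci bi assms(3) by blast
  next
    assume "reach (insert c S') E w b"
    then show "reach (insert c S') E w c" using reach_step[of "insert c S'" E w b c] ci bi ebc by blast
  qed
  then have wc: "reach (insert c S') E w c \<longleftrightarrow> b \<in> component S' E' w"
    using assms unfolding component_def by auto
  show ?thesis
    unfolding component_def using wc assms(6) assms(5) assms(1)
    by (auto simp: component_def)
qed

lemma add_vertex_good:
  assumes "c \<notin> S'" "b \<in> S'" "E c b" "symE E" "symE E'"
    "\<forall>x\<in>S'. \<forall>y\<in>S'. reach (insert c S') E x y \<longleftrightarrow> reach S' E' x y"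
    "\<forall>x\<in>S'. \<forall>y\<in>S'. E x y \<noteq> E' x y \<longrightarrow> x \<in> component S' E' b"
    "proper_interval (component S' E' b) E' \<or> \<not> has_core (component S' E' b) E' \<Longrightarrow>
     proper_interval (insert c (component S' E' b)) E \<or> \<not> has_core (insert c (component S' E' b)) E"
    "good S' E'"
  shows "good (insert c S') E"
  unfolding good_def
proof
  fix v assume v: "v \<in> insert c S'"
  define w where "w = (if v = c then b else v)"
  have wS: "w \<in> S'" using v assms(2) unfolding w_def by auto
  have cv: "component (insert c S') E v = component (insert c S') E w"
  proof (cases "v = c")
    case True
    have sym: "\<And>x y. E x y = E y x" using assms(4) unfolding symE_def by auto
    have "reach (insert c S') E b c" using reach_edge[of b "insert c S'" c E] assms(2,3) sym by simp
    then have "v \<in> component (insert c S') E w"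
      unfolding component_def using True w_def by simp
    then show ?thesis using component_eq assms(4) by metis
  qed (simp add: w_def)
  have ci: "component (insert c S') E w =
     (if b \<in> component S' E' w then insert c (component S' E' w) else component S' E' w)"
    by (rule comp_insert[OF assms(1-4) wS assms(6)])
  have gw: "proper_interval (component S' E' w) E' \<or> \<not> has_core (component S' E' w) E'"
    using assms(9) wS unfolding good_def by auto
  show "proper_interval (component (insert c S') E v) E \<or> \<not> has_core (component (insert c S') E v) E"
  proof (cases "b \<in> component S' E' w")
    case True
    then have "component S' E' w = component S' E' b" using component_eq assms(5) by metis
    then show ?thesis using cv ci True gw assms(8) by simp
  next
    case False
    have agree: "\<forall>x\<in>component S' E' w. \<forall>y\<in>component S' E' w. E x y = E' x y"
    proof (intro ballI)
      fix x y assume x: "x \<in> component S' E' w" and y: "y \<in> component S' E' w"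
      show "E x y = E' x y"
      proof (rule ccontr)
        assume "E x y \<noteq> E' x y"
        moreover have "x \<in> S'" "y \<in> S'" using x y unfolding component_def by simp_all
        ultimately have "x \<in> component S' E' b" using assms(7) by blast
        then have "component S' E' w = component S' E' b" using x component_eq assms(5) by metis
        then show False using False component_self assms(2) by metis
      qed
    qed
    have eqC: "component (insert c S') E v = component S' E' w" using cv ci False by simp
    then show ?thesis using gw PI_cong[OF agree] has_core_cong[OF agree] by simp
  qed
qed

lemma rem_vertex_good:
  assumes "c \<notin> S'" "b \<in> S'" "E c b" "symE E" "symE E'"
    "\<forall>x\<in>S'. \<forall>y\<in>S'. reach (insert c S') E x y \<longleftrightarrow> reach S' E' x y"
    "\<forall>x\<in>S'. \<forall>y\<in>S'. E x y \<noteq> E' x y \<longrightarrow> x \<in> component S' E' b"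
    "proper_interval (insert c (component S' E' b)) E \<or> \<not> has_core (insert c (component S' E' b)) E \<Longrightarrow>
     proper_interval (component S' E' b) E' \<or> \<not> has_core (component S' E' b) E'"
    "good (insert c S') E"
  shows "good S' E'"
  unfolding good_def
proof
  fix w assume wS: "w \<in> S'"
  have ci: "component (insert c S') E w =
     (if b \<in> component S' E' w then insert c (component S' E' w) else component S' E' w)"
    by (rule comp_insert[OF assms(1-4) wS assms(6)])
  have gw: "proper_interval (component (insert c S') E w) E \<or> \<not> has_core (component (insert c S') E w) E"
    using assms(9) wS unfolding good_def by auto
  show "proper_interval (component S' E' w) E' \<or> \<not> has_core (component S' E' w) E'"
  proof (cases "b \<in> component S' E' w")
    case True
    then have "component S' E' w = component S' E' b" using component_eq assms(5) by metis
    then show ?thesis using ci True gw assms(8) by simp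
  next
    case False
    have agree: "\<forall>x\<in>component S' E' w. \<forall>y\<in>component S' E' w. E x y = E' x y"
    proof (intro ballI)
      fix x y assume x: "x \<in> component S' E' w" and y: "y \<in> component S' E' w"
      show "E x y = E' x y"
      proof (rule ccontr)
        assume "E x y \<noteq> E' x y"
        moreover have "x \<in> S'" "y \<in> S'" using x y unfolding component_def by simp_all
        ultimately have "x \<in> component S' E' b" using assms(7) by blast
        then have "component S' E' w = component S' E' b" using x component_eq assms(5) by metis
        then show False using False component_self assms(2) by metis
      qed
    qed
    have eqC: "component (insert c S') E w = component S' E' w" using ci False by simp
    then show ?thesis using gw PI_cong[OF agree] has_core_cong[OF agree] by simp
  qed
qed

lemma add_isolated_good:
  assumes "c \<notin> S'" "symE E" "\<forall>x\<in>S'. \<not> E c x" "\<forall>x\<in>S'. \<forall>y\<in>S'. E x y = E' x y"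
    "good S' E'"
  shows "good (insert c S') E"
  unfolding good_def
proof
  have sym: "\<And>x y. E x y = E y x" and irr: "\<And>x. \<not> E x x" using assms(2) unfolding symE_def by auto
  have noc: "\<And>x y. x \<in> insert c S' \<Longrightarrow> y \<in> insert c S' \<Longrightarrow> E x y \<Longrightarrow> x \<noteq> c \<and> y \<noteq> c"
    using assms(3) sym irr by blast
  have r1: "\<And>x y. reach (insert c S') E x y \<Longrightarrow> x \<noteq> c \<Longrightarrow> reach S' E x y"
  proof -
    fix x y assume "reach (insert c S') E x y" "x \<noteq> c"
    then show "reach S' E x y"
    proof (induction rule: reach_induct)
      case refl then show ?case by simp
    next
      case (step y z)
      have "y \<noteq> c" "z \<noteq> c" using noc step by auto
      then show ?case using step reach_step by (metis insertE)
    qed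
  qed
  have r2: "\<And>y. reach (insert c S') E c y \<Longrightarrow> y = c"
  proof -
    fix y assume "reach (insert c S') E c y"
    then show "y = c"
    proof (induction rule: reach_induct)
      case refl then show ?case by simp
    next
      case (step y z) then show ?case using noc by blast
    qed
  qed
  fix v assume v: "v \<in> insert c S'"
  show "proper_interval (component (insert c S') E v) E \<or> \<not> has_core (component (insert c S') E v) E"
  proof (cases "v = c")
    case True
    then have "component (insert c S') E v = {c}" using r2 unfolding component_def by auto
    moreover have "proper_interval {c} E"
      unfolding proper_interval_def by (rule exI[of _ "\<lambda>_. 0"], rule exI[of _ "\<lambda>_. 0"]) simp
    ultimately show ?thesis by simp
  next
    case False
    then have vS: "v \<in> S'" using v by auto
    have "component (insert c S') E v = component S' E v"
    proof
      show "component (insert c S') E v \<subseteq> component S' E v"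
      proof
        fix u assume u: "u \<in> component (insert c S') E v"
        then have ru: "reach S' E v u" using r1 False unfolding component_def by auto
        have "u \<in> S'"
        proof (cases "u = v")
          case True then show ?thesis using vS by simp
        next
          case False then show ?thesis using reach_mem[OF ru] by simp
        qed
        then show "u \<in> component S' E v" using ru unfolding component_def by simp
      qed
    next
      show "component S' E v \<subseteq> component (insert c S') E v"
        unfolding component_def using reach_mono[of S' E v _ "insert c S'" E] by auto
    qed
    moreover have "component S' E v = component S' E' v"
      unfolding component_def using reach_mono[of S' E v _ S' E'] reach_mono[of S' E' v _ S' E] assms(4)
      by auto
    moreover have agree: "\<forall>x\<in>component S' E' v. \<forall>y\<in>component S' E' v. E x y = E' x y"
      using assms(4) unfolding component_def by simp
    moreover have "proper_interval (component S' E' v) E' \<or> \<not> has_core (component S' E' v) E'"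
      using assms(5) vS unfolding good_def by blast
    ultimately show ?thesis using PI_cong[OF agree] has_core_cong[OF agree] by simp
  qed
qed



lemma PI_S_core:
  fixes l r :: "'a \<Rightarrow> real"
  assumes lr: "\<forall>v\<in>C'. l v \<le> r v"
    and pr: "\<forall>u\<in>C'. \<forall>v\<in>C'. \<not> (l u \<le> l v \<and> r v \<le> r u \<and> (l u < l v \<or> r v < r u))"
    and adj: "\<forall>u\<in>C'. \<forall>v\<in>C'. u \<noteq> v \<longrightarrow> (E' u v \<longleftrightarrow> l u \<le> r v \<and> l v \<le> r u)"
    and cC: "c \<notin> C'" and bC: "b \<in> C'" and dC: "d \<in> C'" and bd: "b \<noteq> d" and Ebd': "E' b d"
    and Eold: "\<forall>x\<in>C'. \<forall>y\<in>C'. x \<noteq> y \<longrightarrow> \<not> ((x = b \<and> y = d) \<or> (x = d \<and> y = b)) \<longrightarrow> E x y = E' x y"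
    and nEbd: "\<not> E b d" "\<not> E d b"
    and Ec: "\<forall>x\<in>C'. (E c x \<longleftrightarrow> x = b \<or> x = d) \<and> (E x c \<longleftrightarrow> x = b \<or> x = d)"
    and nocommon: "\<forall>w\<in>C'. w \<noteq> b \<longrightarrow> w \<noteq> d \<longrightarrow> \<not> (E' b w \<and> E' d w)"
    and lbd: "l b \<le> l d"
  shows "proper_interval (insert c C') E"
proof -
  have ldrb: "l d \<le> r b" using adj bC dC bd Ebd' by auto
  have rbrd: "r b \<le> r d" using pr bC dC lbd by force
  have lbrb: "l b \<le> r b" "l d \<le> r d" using lr bC dC by auto
  have cls: "\<And>w. w \<in> C' \<Longrightarrow> w \<noteq> b \<Longrightarrow> w \<noteq> d \<Longrightarrow> r w < l d \<or> r b < l w"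
  proof (rule ccontr)
    fix w assume w: "w \<in> C'" "w \<noteq> b" "w \<noteq> d" "\<not> (r w < l d \<or> r b < l w)"
    then have "E' b w" using adj bC lbd by auto
    moreover have "E' d w" using adj dC w rbrd by auto
    ultimately show False using nocommon w by auto
  qed
  define K where "K = r b - l d + 3"
  have K3: "K \<ge> 3" using ldrb unfolding K_def by simp
  define l' where "l' = (\<lambda>w. if w = c then r b + 1 else if w = d then r b + 2
                            else if r b < l w then l w + K else l w)"
  define r' where "r' = (\<lambda>w. if w = c then r b + 2 else if w = b then r b + 1 else if w = d then r d + K
                            else if r b < l w then r w + K else r w)"
  have vc: "l' c = r b + 1" "r' c = r b + 2" unfolding l'_def r'_def by auto
  have vb: "l' b = l b" "r' b = r b + 1" unfolding l'_def r'_def using bd cC bC lbrb by auto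
  have vd: "l' d = r b + 2" "r' d = r d + K" unfolding l'_def r'_def using bd cC dC by auto
  have vL: "\<And>w. w \<in> C' \<Longrightarrow> w \<noteq> b \<Longrightarrow> w \<noteq> d \<Longrightarrow> r w < l d \<Longrightarrow> l' w = l w \<and> r' w = r w"
    unfolding l'_def r'_def using cC lr ldrb by fastforce
  have vR: "\<And>w. w \<in> C' \<Longrightarrow> w \<noteq> b \<Longrightarrow> w \<noteq> d \<Longrightarrow> r b < l w \<Longrightarrow> l' w = l w + K \<and> r' w = r w + K"
    unfolding l'_def r'_def using cC by fastforce
  define cl where "cl = (\<lambda>u. u = c \<or> u = b \<or> u = d \<or> (u \<in> C' \<and> u \<noteq> b \<and> u \<noteq> d \<and> r u < l d)
          \<or> (u \<in> C' \<and> u \<noteq> b \<and> u \<noteq> d \<and> r b < l u))"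
  have clA: "\<And>u. u \<in> insert c C' \<Longrightarrow> cl u" unfolding cl_def using cls by blast
  show ?thesis unfolding proper_interval_def
  proof (rule exI[of _ l'], rule exI[of _ r'], intro conjI)
    show "\<forall>v\<in>insert c C'. l' v \<le> r' v"
    proof
      fix v assume "v \<in> insert c C'"
      then have "cl v" by (rule clA)
      then show "l' v \<le> r' v" unfolding cl_def apply (elim disjE) apply (insert lr lbrb K3 ldrb rbrd)
        by (simp_all add: vc vb vd vL vR)
    qed
    show "\<forall>u\<in>insert c C'. \<forall>v\<in>insert c C'. \<not> (l' u \<le> l' v \<and> r' v \<le> r' u \<and> (l' u < l' v \<or> r' v < r' u))"
    proof (intro ballI)
      fix u v assume u: "u \<in> insert c C'" and v: "v \<in> insert c C'"
      have lu: "u \<in> C' \<Longrightarrow> l u \<le> r u" and lv: "v \<in> C' \<Longrightarrow> l v \<le> r v" using lr by auto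
      have pu: "u \<in> C' \<Longrightarrow> v \<in> C' \<Longrightarrow> \<not> (l u \<le> l v \<and> r v \<le> r u \<and> (l u < l v \<or> r v < r u))"
        using pr by auto
      show "\<not> (l' u \<le> l' v \<and> r' v \<le> r' u \<and> (l' u < l' v \<or> r' v < r' u))"
        using clA[OF u] clA[OF v] unfolding cl_def
        apply (elim disjE)
        apply (insert lu lv pu lbrb K3 ldrb rbrd bC dC)
        apply (simp_all add: vc vb vd vL vR)
        done
    qed
    show "\<forall>u\<in>insert c C'. \<forall>v\<in>insert c C'. u \<noteq> v \<longrightarrow> (E u v \<longleftrightarrow> l' u \<le> r' v \<and> l' v \<le> r' u)"
    proof (intro ballI impI)
      fix u v assume u: "u \<in> insert c C'" and v: "v \<in> insert c C'" and uv: "u \<noteq> v"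
      have lu: "u \<in> C' \<Longrightarrow> l u \<le> r u" and lv: "v \<in> C' \<Longrightarrow> l v \<le> r v" using lr by auto
      have au: "u \<in> C' \<Longrightarrow> v \<in> C' \<Longrightarrow> (E' u v \<longleftrightarrow> l u \<le> r v \<and> l v \<le> r u)"
        using adj uv by auto
      have eu: "u \<in> C' \<Longrightarrow> v \<in> C' \<Longrightarrow> \<not> ((u = b \<and> v = d) \<or> (u = d \<and> v = b)) \<Longrightarrow> E u v = E' u v"
        using Eold uv by auto
      show "E u v \<longleftrightarrow> l' u \<le> r' v \<and> l' v \<le> r' u"
        using clA[OF u] clA[OF v] unfolding cl_def
        apply (elim disjE)
        apply (insert lu lv au eu lbrb K3 ldrb rbrd bC dC Ec nEbd uv cC)
        apply (simp_all add: vc vb vd vL vR)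
        done
    qed
  qed
qed



lemma PI_C_core:
  fixes l r :: "'a \<Rightarrow> real"
  assumes lr: "\<forall>v\<in>insert c C'. l v \<le> r v"
    and pr: "\<forall>u\<in>insert c C'. \<forall>v\<in>insert c C'. \<not> (l u \<le> l v \<and> r v \<le> r u \<and> (l u < l v \<or> r v < r u))"
    and adj: "\<forall>u\<in>insert c C'. \<forall>v\<in>insert c C'. u \<noteq> v \<longrightarrow> (E u v \<longleftrightarrow> l u \<le> r v \<and> l v \<le> r u)"
    and cC: "c \<notin> C'" and bC: "b \<in> C'" and dC: "d \<in> C'" and bd: "b \<noteq> d" and Ebd': "E' b d" "E' d b"
    and Eold: "\<forall>x\<in>C'. \<forall>y\<in>C'. x \<noteq> y \<longrightarrow> \<not> ((x = b \<and> y = d) \<or> (x = d \<and> y = b)) \<longrightarrow> E x y = E' x y"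
    and Ec: "\<forall>x\<in>C'. (E c x \<longleftrightarrow> x = b \<or> x = d)"
    and ori: "r b < l d"
  shows "proper_interval C' E'"
proof -
  have cb: "l c \<le> r b" "l b \<le> r c" using adj bC cC Ec by (metis insertCI)+
  have cd: "l c \<le> r d" "l d \<le> r c" using adj dC cC Ec by (metis insertCI)+
  have lrb: "l b \<le> r b" "l d \<le> r d" "l c \<le> r c" using lr bC dC by auto
  have pcb: "\<not> (l c \<le> l b \<and> r b \<le> r c \<and> (l c < l b \<or> r b < r c))" using pr bC by auto
  have pcd: "\<not> (l c \<le> l d \<and> r d \<le> r c \<and> (l c < l d \<or> r d < r c))" using pr dC by auto
  have lbs: "l b < r b" using pcb cb cd lrb ori by linarith
  have lds: "l d < r d" using pcd cb cd lrb ori by linarith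
  have cls: "\<And>w. w \<in> C' \<Longrightarrow> w \<noteq> b \<Longrightarrow> w \<noteq> d \<Longrightarrow> r w < l c \<or> r c < l w"
  proof -
    fix w assume w: "w \<in> C'" "w \<noteq> b" "w \<noteq> d"
    then have "\<not> E c w" using Ec by auto
    moreover have "c \<noteq> w" using w cC by auto
    ultimately have "\<not> (l c \<le> r w \<and> l w \<le> r c)" using adj w by auto
    then show "r w < l c \<or> r c < l w" by linarith
  qed
  define K where "K = l d - r b"
  have K0: "K > 0" using ori unfolding K_def by simp
  define l' where "l' = (\<lambda>w. if r b < l w then l w - K else l w)"
  define r' where "r' = (\<lambda>w. if r b < l w then r w - K else r w)"
  have vb: "l' b = l b" "r' b = r b" unfolding l'_def r'_def using lrb by auto
  have vd: "l' d = r b" "r' d = r d - K" unfolding l'_def r'_def K_def using ori by auto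
  have vL: "\<And>w. w \<in> C' \<Longrightarrow> r w < l c \<Longrightarrow> l' w = l w \<and> r' w = r w"
    unfolding l'_def r'_def using lr cb by fastforce
  have vR: "\<And>w. w \<in> C' \<Longrightarrow> r c < l w \<Longrightarrow> l' w = l w - K \<and> r' w = r w - K"
    unfolding l'_def r'_def using cd ori by fastforce
  define cl where "cl = (\<lambda>u. u = b \<or> u = d \<or> (u \<in> C' \<and> u \<noteq> b \<and> u \<noteq> d \<and> r u < l c)
          \<or> (u \<in> C' \<and> u \<noteq> b \<and> u \<noteq> d \<and> r c < l u))"
  have clA: "\<And>u. u \<in> C' \<Longrightarrow> cl u" unfolding cl_def using cls by blast
  show ?thesis unfolding proper_interval_def
  proof (rule exI[of _ l'], rule exI[of _ r'], intro conjI)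
    show "\<forall>v\<in>C'. l' v \<le> r' v"
    proof
      fix v assume v: "v \<in> C'"
      then have "cl v" by (rule clA)
      then show "l' v \<le> r' v" unfolding cl_def apply (elim disjE) apply (insert lr lrb K0 lbs lds ori v cb cd)
        by (simp_all add: vb vd vL vR K_def)
    qed
    show "\<forall>u\<in>C'. \<forall>v\<in>C'. \<not> (l' u \<le> l' v \<and> r' v \<le> r' u \<and> (l' u < l' v \<or> r' v < r' u))"
    proof (intro ballI)
      fix u v assume u: "u \<in> C'" and v: "v \<in> C'"
      have lu: "l u \<le> r u" and lv: "l v \<le> r v" using lr u v by auto
      have pu: "\<not> (l u \<le> l v \<and> r v \<le> r u \<and> (l u < l v \<or> r v < r u))"
        using pr u v by auto
      show "\<not> (l' u \<le> l' v \<and> r' v \<le> r' u \<and> (l' u < l' v \<or> r' v < r' u))"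
        using clA[OF u] clA[OF v] unfolding cl_def
        apply (elim disjE)
        apply (insert lu lv pu lrb K0 lbs lds ori cb cd u v)
        apply (simp_all add: vb vd vL vR K_def)
        done
    qed
    show "\<forall>u\<in>C'. \<forall>v\<in>C'. u \<noteq> v \<longrightarrow> (E' u v \<longleftrightarrow> l' u \<le> r' v \<and> l' v \<le> r' u)"
    proof (intro ballI impI)
      fix u v assume u: "u \<in> C'" and v: "v \<in> C'" and uv: "u \<noteq> v"
      have lu: "l u \<le> r u" and lv: "l v \<le> r v" using lr u v by auto
      have au: "E u v \<longleftrightarrow> l u \<le> r v \<and> l v \<le> r u"
        using adj uv u v by auto
      have eu: "\<not> ((u = b \<and> v = d) \<or> (u = d \<and> v = b)) \<Longrightarrow> E u v = E' u v"
        using Eold uv u v by auto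
      show "E' u v \<longleftrightarrow> l' u \<le> r' v \<and> l' v \<le> r' u"
        using clA[OF u] clA[OF v] unfolding cl_def
        apply (elim disjE)
        apply (insert lu lv au eu lrb K0 lbs lds ori cb cd u v uv Ebd')
        apply (simp_all add: vb vd vL vR K_def)
        done
    qed
  qed
qed

lemma PI_P_core:
  fixes l r :: "'a \<Rightarrow> real"
  assumes lr: "\<forall>v\<in>C'. l v \<le> r v"
    and pr: "\<forall>u\<in>C'. \<forall>v\<in>C'. \<not> (l u \<le> l v \<and> r v \<le> r u \<and> (l u < l v \<or> r v < r u))"
    and adj: "\<forall>u\<in>C'. \<forall>v\<in>C'. u \<noteq> v \<longrightarrow> (E' u v \<longleftrightarrow> l u \<le> r v \<and> l v \<le> r u)"
    and cC: "c \<notin> C'" and dC: "d \<in> C'"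
    and Eold: "\<forall>x\<in>C'. \<forall>y\<in>C'. E x y = E' x y"
    and Ec: "\<forall>x\<in>C'. (E c x \<longleftrightarrow> x = d) \<and> (E x c \<longleftrightarrow> x = d)"
    and symE': "\<forall>x y. E' x y = E' y x"
    and deg: "\<forall>x\<in>C'. x \<noteq> d \<longrightarrow> E' d x \<longrightarrow> x = e"
    and ori: "e \<in> C' \<and> e \<noteq> d \<and> E' d e \<longrightarrow> l e \<le> l d"
  shows "proper_interval (insert c C') E"
proof -
  define hE where "hE = (e \<in> C' \<and> e \<noteq> d \<and> E' d e)"
  have lrd: "l d \<le> r d" using lr dC by auto
  have eF: "hE \<Longrightarrow> l e \<le> l d \<and> r e \<le> r d \<and> l d \<le> r e \<and> l e \<le> r e"
  proof -
    assume h: hE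
    then have a: "l e \<le> l d" using ori hE_def by auto
    have b: "l d \<le> r e" using adj h dC unfolding hE_def by auto
    have "\<not> (l e \<le> l d \<and> r d \<le> r e \<and> (l e < l d \<or> r d < r e))" using pr h dC unfolding hE_def by auto
    then have "r e \<le> r d"
    proof -
      have "\<not> (l d \<le> l e \<and> r e \<le> r d \<and> (l d < l e \<or> r e < r d))" using pr h dC unfolding hE_def by auto
      then show ?thesis using a b lrd \<open>\<not> (l e \<le> l d \<and> r d \<le> r e \<and> (l e < l d \<or> r d < r e))\<close> by linarith
    qed
    then show ?thesis using a b lr h unfolding hE_def by auto
  qed
  have cls: "\<And>w. w \<in> C' \<Longrightarrow> w \<noteq> d \<Longrightarrow> \<not> (w = e \<and> hE) \<Longrightarrow> r w < l d \<or> r d < l w"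
  proof -
    fix w assume w: "w \<in> C'" "w \<noteq> d" "\<not> (w = e \<and> hE)"
    have "\<not> E' d w"
    proof
      assume "E' d w"
      then have "w = e" using deg w by auto
      then have hE unfolding hE_def using w \<open>E' d w\<close> by simp
      then show False using w \<open>w = e\<close> by simp
    qed
    then have "\<not> (l d \<le> r w \<and> l w \<le> r d)" using adj w dC by auto
    then show "r w < l d \<or> r d < l w" by linarith
  qed
  define l' where "l' = (\<lambda>w. if w = c then r d + 2 else if w = d then r d + 1
                            else if r d < l w then l w + 4 else l w)"
  define r' where "r' = (\<lambda>w. if w = c then r d + 3 else if w = d then r d + 2
                            else if w = e \<and> hE then r d + 1 else if r d < l w then r w + 4 else r w)"
  have vc: "l' c = r d + 2" "r' c = r d + 3" unfolding l'_def r'_def by auto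
  have vd: "l' d = r d + 1" "r' d = r d + 2" unfolding l'_def r'_def using cC dC by auto
  have ve: "hE \<Longrightarrow> l' e = l e \<and> r' e = r d + 1" unfolding l'_def r'_def hE_def using cC eF hE_def lrd
    by auto
  have vL: "\<And>w. w \<in> C' \<Longrightarrow> w \<noteq> d \<Longrightarrow> \<not> (w = e \<and> hE) \<Longrightarrow> r w < l d \<Longrightarrow> l' w = l w \<and> r' w = r w"
    unfolding l'_def r'_def using cC lr lrd by fastforce
  have vR: "\<And>w. w \<in> C' \<Longrightarrow> w \<noteq> d \<Longrightarrow> \<not> (w = e \<and> hE) \<Longrightarrow> r d < l w \<Longrightarrow> l' w = l w + 4 \<and> r' w = r w + 4"
    unfolding l'_def r'_def using cC by fastforce
  define cl where "cl = (\<lambda>u. u = c \<or> u = d \<or> (u = e \<and> hE) \<or> (u \<in> C' \<and> u \<noteq> d \<and> \<not> (u = e \<and> hE) \<and> r u < l d)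
          \<or> (u \<in> C' \<and> u \<noteq> d \<and> \<not> (u = e \<and> hE) \<and> r d < l u))"
  have clA: "\<And>u. u \<in> insert c C' \<Longrightarrow> cl u" unfolding cl_def using cls by blast
  have eC: "hE \<Longrightarrow> e \<in> C' \<and> e \<noteq> d \<and> E' d e \<and> E' e d" unfolding hE_def using symE' by auto
  show ?thesis unfolding proper_interval_def
  proof (rule exI[of _ l'], rule exI[of _ r'], intro conjI)
    show "\<forall>v\<in>insert c C'. l' v \<le> r' v"
    proof
      fix v assume "v \<in> insert c C'"
      then have "cl v" by (rule clA)
      then show "l' v \<le> r' v" unfolding cl_def apply (elim disjE) apply (insert lr lrd eF)
        by (simp_all add: vc vd ve vL vR)
    qed
    show "\<forall>u\<in>insert c C'. \<forall>v\<in>insert c C'. \<not> (l' u \<le> l' v \<and> r' v \<le> r' u \<and> (l' u < l' v \<or> r' v < r' u))"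
    proof (intro ballI)
      fix u v assume u: "u \<in> insert c C'" and v: "v \<in> insert c C'"
      have lu: "u \<in> C' \<Longrightarrow> l u \<le> r u" and lv: "v \<in> C' \<Longrightarrow> l v \<le> r v" using lr by auto
      have pu: "u \<in> C' \<Longrightarrow> v \<in> C' \<Longrightarrow> \<not> (l u \<le> l v \<and> r v \<le> r u \<and> (l u < l v \<or> r v < r u))"
        using pr by auto
      show "\<not> (l' u \<le> l' v \<and> r' v \<le> r' u \<and> (l' u < l' v \<or> r' v < r' u))"
        using clA[OF u] clA[OF v] unfolding cl_def
        apply (elim disjE)
        apply (insert lu lv pu lrd eF eC dC)
        apply (simp_all add: vc vd ve vL vR)
        done
    qed
    show "\<forall>u\<in>insert c C'. \<forall>v\<in>insert c C'. u \<noteq> v \<longrightarrow> (E u v \<longleftrightarrow> l' u \<le> r' v \<and> l' v \<le> r' u)"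
    proof (intro ballI impI)
      fix u v assume u: "u \<in> insert c C'" and v: "v \<in> insert c C'" and uv: "u \<noteq> v"
      have lu: "u \<in> C' \<Longrightarrow> l u \<le> r u" and lv: "v \<in> C' \<Longrightarrow> l v \<le> r v" using lr by auto
      have au: "u \<in> C' \<Longrightarrow> v \<in> C' \<Longrightarrow> (E' u v \<longleftrightarrow> l u \<le> r v \<and> l v \<le> r u)"
        using adj uv by auto
      have eu: "u \<in> C' \<Longrightarrow> v \<in> C' \<Longrightarrow> E u v = E' u v"
        using Eold by auto
      show "E u v \<longleftrightarrow> l' u \<le> r' v \<and> l' v \<le> r' u"
        using clA[OF u] clA[OF v] unfolding cl_def
        apply (elim disjE)
        apply (insert lu lv au eu lrd eF eC dC Ec uv cC)
        apply (simp_all add: vc vd ve vL vR)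
        done
    qed
  qed
qed



definition SC :: "'a set \<Rightarrow> 'a \<Rightarrow> 'a \<Rightarrow> 'a \<Rightarrow> ('a \<Rightarrow> 'a \<Rightarrow> bool) \<Rightarrow> ('a \<Rightarrow> 'a \<Rightarrow> bool) \<Rightarrow> bool" where
  "SC S' c b d E E' \<longleftrightarrow> c \<notin> S' \<and> b \<in> S' \<and> d \<in> S' \<and> b \<noteq> d \<and> E' b d \<and> \<not> E b d
     \<and> (\<forall>x\<in>S'. \<forall>y\<in>S'. (x = b \<and> y = d) \<or> (x = d \<and> y = b) \<or> E x y = E' x y)
     \<and> (\<forall>x\<in>S'. E c x \<longleftrightarrow> x = b \<or> x = d) \<and> symE E \<and> symE E'"

definition PP :: "'a set \<Rightarrow> 'a \<Rightarrow> 'a \<Rightarrow> ('a \<Rightarrow> 'a \<Rightarrow> bool) \<Rightarrow> ('a \<Rightarrow> 'a \<Rightarrow> bool) \<Rightarrow> bool" where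
  "PP S' c d E E' \<longleftrightarrow> c \<notin> S' \<and> d \<in> S' \<and> (\<forall>x\<in>S'. E c x \<longleftrightarrow> x = d)
     \<and> (\<forall>x\<in>S'. \<forall>y\<in>S'. E x y = E' x y) \<and> symE E \<and> symE E'"

lemma symE_D: "symE E \<Longrightarrow> E x y = E y x" "symE E \<Longrightarrow> \<not> E x x"
  unfolding symE_def by auto

lemma SC_D:
  assumes "SC S' c b d E E'"
  shows "c \<notin> S'" "b \<in> S'" "d \<in> S'" "b \<noteq> d" "E' b d" "E' d b" "\<not> E b d" "\<not> E d b"
    "\<And>x. x \<in> S' \<Longrightarrow> E c x \<longleftrightarrow> x = b \<or> x = d"
    "\<And>x. x \<in> S' \<Longrightarrow> E x c \<longleftrightarrow> x = b \<or> x = d"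
    "\<And>x y. x \<in> S' \<Longrightarrow> y \<in> S' \<Longrightarrow> E x y \<Longrightarrow> E' x y"
    "\<And>x y. x \<in> S' \<Longrightarrow> y \<in> S' \<Longrightarrow> E' x y \<Longrightarrow> \<not> ((x = b \<and> y = d) \<or> (x = d \<and> y = b)) \<Longrightarrow> E x y"
    "symE E" "symE E'" "\<not> E c c"
  using assms unfolding SC_def symE_def by metis+

lemma PP_D:
  assumes "PP S' c d E E'"
  shows "c \<notin> S'" "d \<in> S'" "\<And>x. x \<in> S' \<Longrightarrow> E c x \<longleftrightarrow> x = d" "\<And>x. x \<in> S' \<Longrightarrow> E x c \<longleftrightarrow> x = d"
    "\<And>x y. x \<in> S' \<Longrightarrow> y \<in> S' \<Longrightarrow> E x y = E' x y"
    "symE E" "symE E'" "\<not> E c c"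
  using assms unfolding PP_def symE_def by metis+

lemma PI_S:
  assumes sc: "SC S' c b d E E'" and sub: "C' \<subseteq> S'" and bC: "b \<in> C'" and dC: "d \<in> C'"
    and nc: "\<forall>w\<in>C'. w \<noteq> b \<longrightarrow> w \<noteq> d \<longrightarrow> \<not> (E' b w \<and> E' d w)"
    and pi: "proper_interval C' E'"
  shows "proper_interval (insert c C') E"
proof -
  note D = SC_D[OF sc]
  obtain l r :: "'a \<Rightarrow> real" where lr: "\<forall>v\<in>C'. l v \<le> r v"
     "\<forall>u\<in>C'. \<forall>v\<in>C'. \<not> (l u \<le> l v \<and> r v \<le> r u \<and> (l u < l v \<or> r v < r u))"
     "\<forall>u\<in>C'. \<forall>v\<in>C'. u \<noteq> v \<longrightarrow> (E' u v \<longleftrightarrow> l u \<le> r v \<and> l v \<le> r u)"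
    using pi unfolding proper_interval_def by blast
  have cC: "c \<notin> C'" using D(1) sub by auto
  have Eold: "\<forall>x\<in>C'. \<forall>y\<in>C'. x \<noteq> y \<longrightarrow> \<not> ((x = b \<and> y = d) \<or> (x = d \<and> y = b)) \<longrightarrow> E x y = E' x y"
    using D(11,12) sub by blast
  have Eold2: "\<forall>x\<in>C'. \<forall>y\<in>C'. x \<noteq> y \<longrightarrow> \<not> ((x = d \<and> y = b) \<or> (x = b \<and> y = d)) \<longrightarrow> E x y = E' x y"
    using Eold by blast
  have Ec: "\<forall>x\<in>C'. (E c x \<longleftrightarrow> x = b \<or> x = d) \<and> (E x c \<longleftrightarrow> x = b \<or> x = d)"
    using D(9,10) sub by blast
  have Ec2: "\<forall>x\<in>C'. (E c x \<longleftrightarrow> x = d \<or> x = b) \<and> (E x c \<longleftrightarrow> x = d \<or> x = b)"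
    using Ec by blast
  have nc2: "\<forall>w\<in>C'. w \<noteq> d \<longrightarrow> w \<noteq> b \<longrightarrow> \<not> (E' d w \<and> E' b w)" using nc by blast
  show ?thesis
  proof (cases "l b \<le> l d")
    case True
    show ?thesis by (rule PI_S_core[OF lr cC bC dC D(4) D(5) Eold D(7) D(8) Ec nc True])
  next
    case False
    then have "l d \<le> l b" by simp
    show ?thesis by (rule PI_S_core[OF lr cC dC bC D(4)[symmetric] D(6) Eold2 D(8) D(7) Ec2 nc2 \<open>l d \<le> l b\<close>])
  qed
qed

lemma PI_C:
  assumes sc: "SC S' c b d E E'" and sub: "C' \<subseteq> S'" and bC: "b \<in> C'" and dC: "d \<in> C'"
    and pi: "proper_interval (insert c C') E"
  shows "proper_interval C' E'"
proof -
  note D = SC_D[OF sc]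
  obtain l r :: "'a \<Rightarrow> real" where lr: "\<forall>v\<in>insert c C'. l v \<le> r v"
     "\<forall>u\<in>insert c C'. \<forall>v\<in>insert c C'. \<not> (l u \<le> l v \<and> r v \<le> r u \<and> (l u < l v \<or> r v < r u))"
     "\<forall>u\<in>insert c C'. \<forall>v\<in>insert c C'. u \<noteq> v \<longrightarrow> (E u v \<longleftrightarrow> l u \<le> r v \<and> l v \<le> r u)"
    using pi unfolding proper_interval_def by blast
  have cC: "c \<notin> C'" using D(1) sub by auto
  have Eold: "\<forall>x\<in>C'. \<forall>y\<in>C'. x \<noteq> y \<longrightarrow> \<not> ((x = b \<and> y = d) \<or> (x = d \<and> y = b)) \<longrightarrow> E x y = E' x y"
    using D(11,12) sub by blast
  have Eold2: "\<forall>x\<in>C'. \<forall>y\<in>C'. x \<noteq> y \<longrightarrow> \<not> ((x = d \<and> y = b) \<or> (x = b \<and> y = d)) \<longrightarrow> E x y = E' x y"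
    using Eold by blast
  have Ec: "\<forall>x\<in>C'. (E c x \<longleftrightarrow> x = b \<or> x = d)"
    using D(9) sub by blast
  have Ec2: "\<forall>x\<in>C'. (E c x \<longleftrightarrow> x = d \<or> x = b)"
    using Ec by blast
  have "\<not> (l b \<le> r d \<and> l d \<le> r b)" using lr(3) bC dC D(4,7) by auto
  then have "r b < l d \<or> r d < l b" by linarith
  then show ?thesis
  proof
    assume o: "r b < l d"
    show ?thesis by (rule PI_C_core[OF lr cC bC dC D(4) D(5) D(6) Eold Ec o])
  next
    assume o: "r d < l b"
    show ?thesis by (rule PI_C_core[OF lr cC dC bC D(4)[symmetric] D(6) D(5) Eold2 Ec2 o])
  qed
qed

lemma PI_P:
  assumes pp: "PP S' c d E E'" and sub: "C' \<subseteq> S'" and dC: "d \<in> C'"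
    and deg: "\<forall>x\<in>C'. \<forall>y\<in>C'. E' d x \<longrightarrow> E' d y \<longrightarrow> x = y"
    and pi: "proper_interval C' E'"
  shows "proper_interval (insert c C') E"
proof -
  note D = PP_D[OF pp]
  obtain l r :: "'a \<Rightarrow> real" where lr: "\<forall>v\<in>C'. l v \<le> r v"
     "\<forall>u\<in>C'. \<forall>v\<in>C'. \<not> (l u \<le> l v \<and> r v \<le> r u \<and> (l u < l v \<or> r v < r u))"
     "\<forall>u\<in>C'. \<forall>v\<in>C'. u \<noteq> v \<longrightarrow> (E' u v \<longleftrightarrow> l u \<le> r v \<and> l v \<le> r u)"
    using pi unfolding proper_interval_def by blast
  have cC: "c \<notin> C'" using D(1) sub by auto
  have Eold: "\<forall>x\<in>C'. \<forall>y\<in>C'. E x y = E' x y" using D(5) sub by blast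
  have Ec: "\<forall>x\<in>C'. (E c x \<longleftrightarrow> x = d) \<and> (E x c \<longleftrightarrow> x = d)" using D(3,4) sub by blast
  have sE: "\<forall>x y. E' x y = E' y x" using D(7) unfolding symE_def by auto
  define e where "e = (if \<exists>x\<in>C'. E' d x then (SOME x. x \<in> C' \<and> E' d x) else d)"
  have degE: "\<forall>x\<in>C'. x \<noteq> d \<longrightarrow> E' d x \<longrightarrow> x = e"
  proof (intro ballI impI)
    fix x assume x: "x \<in> C'" "x \<noteq> d" "E' d x"
    then have ex: "\<exists>x\<in>C'. E' d x" by auto
    then have "e \<in> C' \<and> E' d e" unfolding e_def by (simp add: Bex_def) (rule someI_ex, auto)
    then show "x = e" using deg x by auto
  qed
  show ?thesis
  proof (cases "e \<in> C' \<and> e \<noteq> d \<and> E' d e \<and> l d < l e")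
    case False
    then have ori: "e \<in> C' \<and> e \<noteq> d \<and> E' d e \<longrightarrow> l e \<le> l d" by auto
    show ?thesis by (rule PI_P_core[OF lr cC dC Eold Ec sE degE ori])
  next
    case True
    have "\<not> (l d \<le> l e \<and> r e \<le> r d \<and> (l d < l e \<or> r e < r d))" using lr(2)[rule_format, of d e] True dC by blast
    then have rde: "r d < r e" using True by auto
    let ?l = "\<lambda>v. - r v" and ?r = "\<lambda>v. - l v"
    have lr2: "\<forall>v\<in>C'. ?l v \<le> ?r v"
     "\<forall>u\<in>C'. \<forall>v\<in>C'. \<not> (?l u \<le> ?l v \<and> ?r v \<le> ?r u \<and> (?l u < ?l v \<or> ?r v < ?r u))"
     "\<forall>u\<in>C'. \<forall>v\<in>C'. u \<noteq> v \<longrightarrow> (E' u v \<longleftrightarrow> ?l u \<le> ?r v \<and> ?l v \<le> ?r u)"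
      using lr by (auto; metis)+
    have ori: "e \<in> C' \<and> e \<noteq> d \<and> E' d e \<longrightarrow> ?l e \<le> ?l d" using rde by auto
    show ?thesis by (rule PI_P_core[OF lr2 cC dC Eold Ec sE degE ori])
  qed
qed



lemma SC_reach:
  assumes sc: "SC S' c b d E E'"
  shows "\<forall>x\<in>S'. \<forall>y\<in>S'. reach (insert c S') E x y \<longleftrightarrow> reach S' E' x y"
proof (intro ballI iffI)
  note D = SC_D[OF sc]
  fix x y assume x: "x \<in> S'" and y: "y \<in> S'"
  {
    assume "reach (insert c S') E x y"
    define \<pi> where "\<pi> = (\<lambda>u. if u = c then b else u)"
    have "reach S' E' (\<pi> x) (\<pi> y)"
    proof (rule reach_proj[of "insert c S'" E x y S' E' \<pi>])
      show "reach (insert c S') E x y" by fact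
    next
      fix u v assume u: "u \<in> insert c S'" and v: "v \<in> insert c S'" and e: "E u v"
      show "reach S' E' (\<pi> u) (\<pi> v)"
      proof (cases "u = c")
        case True
        then have "v \<noteq> c" using e D(15) by auto
        then have "v \<in> S'" "v = b \<or> v = d" using v e True D(9) by auto
        then have pu: "\<pi> u = b" "\<pi> v = v" using True \<open>v \<noteq> c\<close> \<pi>_def by auto
        have "reach S' E' b d" using reach_edge[of b S' d E'] D(2,3,5) by simp
        then show ?thesis using pu \<open>v = b \<or> v = d\<close> by auto
      next
        case False
        note uc = False
        show ?thesis
        proof (cases "v = c")
          case True
          then have "u \<in> S'" "u = b \<or> u = d" using u e uc D(10) by auto
          then have pu: "\<pi> u = u" "\<pi> v = b" using True uc \<pi>_def by auto
          have "reach S' E' d b" using reach_edge[of d S' b E'] D(2,3,6) by simp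
          then show ?thesis using pu \<open>u = b \<or> u = d\<close> by auto
        next
          case False
          then have "u \<in> S'" "v \<in> S'" using u v uc by auto
          then have "E' u v" using D(11) e by auto
          then show ?thesis using \<open>u \<in> S'\<close> \<open>v \<in> S'\<close> uc False \<pi>_def reach_edge by fastforce
        qed
      qed
    qed
    moreover have "x \<noteq> c" "y \<noteq> c" using x y D(1) by auto
    ultimately show "reach S' E' x y" using \<pi>_def by simp
  next
    assume "reach S' E' x y"
    have "reach (insert c S') E (id x) (id y)"
    proof (rule reach_proj[of S' E' x y "insert c S'" E id])
      show "reach S' E' x y" by fact
    next
      fix u v assume u: "u \<in> S'" and v: "v \<in> S'" and e: "E' u v"
      have bi: "b \<in> insert c S'" "d \<in> insert c S'" "c \<in> insert c S'" using D(2,3) by auto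
      show "reach (insert c S') E (id u) (id v)"
      proof (cases "(u = b \<and> v = d) \<or> (u = d \<and> v = b)")
        case True
        have "E b c" "E c d" "E d c" "E c b" using D(2,3,9,10) by auto
        then have "reach (insert c S') E b d" "reach (insert c S') E d b"
          using bi reach_edge reach_trans by metis+
        then show ?thesis using True by auto
      next
        case False
        then have "E u v" using D(12) u v e by auto
        then show ?thesis using u v reach_edge by (metis id_apply insertCI)
      qed
    qed
    then show "reach (insert c S') E x y" by simp
  }
qed

lemma PP_reach:
  assumes pp: "PP S' c d E E'"
  shows "\<forall>x\<in>S'. \<forall>y\<in>S'. reach (insert c S') E x y \<longleftrightarrow> reach S' E' x y"
proof (intro ballI iffI)
  note D = PP_D[OF pp]
  fix x y assume x: "x \<in> S'" and y: "y \<in> S'"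
  {
    assume "reach (insert c S') E x y"
    define \<pi> where "\<pi> = (\<lambda>u. if u = c then d else u)"
    have "reach S' E' (\<pi> x) (\<pi> y)"
    proof (rule reach_proj[of "insert c S'" E x y S' E' \<pi>])
      show "reach (insert c S') E x y" by fact
    next
      fix u v assume u: "u \<in> insert c S'" and v: "v \<in> insert c S'" and e: "E u v"
      show "reach S' E' (\<pi> u) (\<pi> v)"
      proof (cases "u = c")
        case True
        then have "v \<noteq> c" using e D(8) by auto
        then have "v = d" using v e True D(3) by auto
        then show ?thesis using True \<pi>_def by simp
      next
        case False
        note uc = False
        show ?thesis
        proof (cases "v = c")
          case True
          then have "u = d" using u e uc D(4) by auto
          then show ?thesis using True \<pi>_def by simp
        next
          case False
          then have "u \<in> S'" "v \<in> S'" using u v uc by auto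
          then have "E' u v" using D(5) e by auto
          then show ?thesis using \<open>u \<in> S'\<close> \<open>v \<in> S'\<close> uc False \<pi>_def reach_edge by fastforce
        qed
      qed
    qed
    moreover have "x \<noteq> c" "y \<noteq> c" using x y D(1) by auto
    ultimately show "reach S' E' x y" using \<pi>_def by simp
  next
    assume "reach S' E' x y"
    then show "reach (insert c S') E x y"
      using reach_mono[of S' E' x y "insert c S'" E] D(5) by auto
  }
qed

lemma core_S:
  assumes sc: "SC S' c b d E E'" and sub: "C' \<subseteq> S'" and hc: "has_core (insert c C') E"
  shows "has_core C' E'"
proof -
  note D = SC_D[OF sc]
  obtain T where T: "T \<subseteq> insert c C'" "core T E" using hc unfolding has_core_def by auto
  have irr: "\<And>x. \<not> E x x" using D(13) symE_D by metis
  show ?thesis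
  proof (cases "c \<in> T")
    case True
    obtain y z where yz: "y \<in> T" "z \<in> T" "y \<noteq> z" "E c y" "E c z" using T(2) True unfolding core_def by blast
    have "y \<noteq> c" "z \<noteq> c" using yz irr by auto
    then have "y \<in> S'" "z \<in> S'" using yz T(1) sub by auto
    then have "y = b \<or> y = d" "z = b \<or> z = d" using yz D(9) by auto
    then have bT: "b \<in> T" and dT: "d \<in> T" using yz by auto
    define T' where "T' = T - {c}"
    have T'sub: "T' \<subseteq> C'" using T(1) unfolding T'_def by auto
    have "core T' E'"
      unfolding core_def
    proof (intro conjI ballI)
      show "T' \<noteq> {}" using bT D(1,2) unfolding T'_def by auto
    next
      fix x assume x: "x \<in> T'"
      then have xS: "x \<in> S'" "x \<noteq> c" using T'sub sub unfolding T'_def by auto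
      obtain y z where yz: "y \<in> T" "z \<in> T" "y \<noteq> z" "E x y" "E x z"
        using T(2) x unfolding core_def T'_def by blast
      define w where "w = (if y \<noteq> c then y else z)"
      have w: "w \<in> T'" "E x w" using yz unfolding w_def T'_def by auto
      have wS: "w \<in> S'" using w T'sub sub by auto
      show "\<exists>y\<in>T'. \<exists>z\<in>T'. y \<noteq> z \<and> E' x y \<and> E' x z"
      proof (cases "x = b \<or> x = d")
        case True
        define ot where "ot = (if x = b then d else b)"
        have "w \<noteq> b" "w \<noteq> d" using True w D(7,8) irr by auto
        then have wo: "w \<noteq> ot" unfolding ot_def by auto
        have ew: "E' x w" using D(11) xS wS w by auto
        have eo: "E' x ot" using True D(5,6) unfolding ot_def by auto
        have oT: "ot \<in> T'" using bT dT D(1,2,3) unfolding T'_def ot_def by auto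
        show ?thesis using w(1) oT wo ew eo by blast
      next
        case False
        have "y \<noteq> c" "z \<noteq> c" using yz False D(10) xS by auto
        then have "y \<in> T'" "z \<in> T'" "y \<in> S'" "z \<in> S'" using yz T'sub sub unfolding T'_def by auto
        then show ?thesis using yz D(11) xS by blast
      qed
    qed
    then show ?thesis using T'sub unfolding has_core_def by auto
  next
    case False
    then have TC: "T \<subseteq> C'" using T(1) by auto
    have "core T E'" using core_mono[of T E S' E'] T(2) TC sub D(11) by blast
    then show ?thesis using TC unfolding has_core_def by auto
  qed
qed

lemma core_C:
  assumes sc: "SC S' c b d E E'" and sub: "C' \<subseteq> S'" and hc: "has_core C' E'"
  shows "has_core (insert c C') E"
proof -
  note D = SC_D[OF sc]
  obtain T where T: "T \<subseteq> C'" "core T E'" using hc unfolding has_core_def by auto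
  have TS: "T \<subseteq> S'" using T sub by auto
  have irr: "\<And>x. \<not> E' x x" using D(14) symE_D by metis
  show ?thesis
  proof (cases "b \<in> T \<and> d \<in> T")
    case True
    have "core (insert c T) E"
      unfolding core_def
    proof (intro conjI ballI)
      show "insert c T \<noteq> {}" by simp
    next
      fix x assume x: "x \<in> insert c T"
      show "\<exists>y\<in>insert c T. \<exists>z\<in>insert c T. y \<noteq> z \<and> E x y \<and> E x z"
      proof (cases "x = c")
        case True
        then show ?thesis using \<open>b \<in> T \<and> d \<in> T\<close> D(2,3,4,9) by blast
      next
        case False
        then have xT: "x \<in> T" "x \<in> S'" using x TS by auto
        obtain y z where yz: "y \<in> T" "z \<in> T" "y \<noteq> z" "E' x y" "E' x z"
          using T(2) xT unfolding core_def by blast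
        have yzS: "y \<in> S'" "z \<in> S'" using yz TS by auto
        show ?thesis
        proof (cases "x = b \<or> x = d")
          case True
          define w where "w = (if y \<noteq> (if x = b then d else b) then y else z)"
          have w: "w \<in> T" "E' x w" "w \<noteq> (if x = b then d else b)" using yz unfolding w_def by auto
          have "w \<noteq> x" using w irr by auto
          then have "E x w" using D(12) w xT TS True D(4) by auto
          moreover have "E x c" using True D(10) xT by auto
          moreover have "w \<noteq> c" using w TS D(1) by auto
          ultimately show ?thesis using w by blast
        next
          case False
          then have "E x y" "E x z" using D(12) yz yzS xT by auto
          then show ?thesis using yz by blast
        qed
      qed
    qed
    moreover have "insert c T \<subseteq> insert c C'" using T(1) by auto
    ultimately show ?thesis unfolding has_core_def by blast
  next
    case False
    have "core T E"
      unfolding core_def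
    proof (intro conjI ballI)
      show "T \<noteq> {}" using T(2) unfolding core_def by auto
    next
      fix x assume x: "x \<in> T"
      obtain y z where yz: "y \<in> T" "z \<in> T" "y \<noteq> z" "E' x y" "E' x z"
        using T(2) x unfolding core_def by blast
      have "E x y" "E x z" using D(12) yz x TS False by blast+
      then show "\<exists>y\<in>T. \<exists>z\<in>T. y \<noteq> z \<and> E x y \<and> E x z" using yz by blast
    qed
    then show ?thesis using T(1) unfolding has_core_def by auto
  qed
qed

lemma core_P:
  assumes pp: "PP S' c d E E'" and sub: "C' \<subseteq> S'" and hc: "has_core (insert c C') E"
  shows "has_core C' E'"
proof -
  note D = PP_D[OF pp]
  obtain T where T: "T \<subseteq> insert c C'" "core T E" using hc unfolding has_core_def by auto
  have "c \<notin> T"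
  proof
    assume "c \<in> T"
    then obtain y z where yz: "y \<in> T" "z \<in> T" "y \<noteq> z" "E c y" "E c z" using T(2) unfolding core_def by blast
    have "y \<noteq> c" "z \<noteq> c" using yz D(8) by auto
    then have "y \<in> S'" "z \<in> S'" using yz T(1) sub by auto
    then show False using yz D(3) by auto
  qed
  then have TC: "T \<subseteq> C'" using T(1) by auto
  have "core T E'" using core_mono[of T E S' E'] T(2) TC sub D(5) by blast
  then show ?thesis using TC unfolding has_core_def by auto
qed

lemma good_S:
  assumes sc: "SC S' c b d E E'" and nc: "\<forall>w\<in>S'. w \<noteq> b \<longrightarrow> w \<noteq> d \<longrightarrow> \<not> (E' b w \<and> E' d w)"
    and g: "good S' E'"
  shows "good (insert c S') E"
proof -
  note D = SC_D[OF sc]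
  have cb: "E c b" using D(2,9) by auto
  have diff: "\<forall>x\<in>S'. \<forall>y\<in>S'. E x y \<noteq> E' x y \<longrightarrow> x \<in> component S' E' b"
  proof (intro ballI impI)
    fix x y assume x: "x \<in> S'" and y: "y \<in> S'" and ne: "E x y \<noteq> E' x y"
    then have "x = b \<or> x = d" using sc unfolding SC_def by metis
    moreover have "reach S' E' b d" using reach_edge D(2,3,5) by metis
    ultimately show "x \<in> component S' E' b" unfolding component_def using D(2,3) by auto
  qed
  let ?C = "component S' E' b"
  have sub: "?C \<subseteq> S'" by (rule component_sub)
  have bC: "b \<in> ?C" using component_self D(2) by metis
  have dC: "d \<in> ?C" using reach_edge D(2,3,5) unfolding component_def by (metis (mono_tags, lifting) mem_Collect_eq)
  show ?thesis
  proof (rule add_vertex_good[OF D(1,2) cb D(13,14) SC_reach[OF sc] diff _ g])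
    assume "proper_interval ?C E' \<or> \<not> has_core ?C E'"
    then show "proper_interval (insert c ?C) E \<or> \<not> has_core (insert c ?C) E"
    proof
      assume "proper_interval ?C E'"
      then show ?thesis using PI_S[OF sc sub bC dC] nc sub by blast
    next
      assume "\<not> has_core ?C E'"
      then show ?thesis using core_S[OF sc sub] by blast
    qed
  qed
qed

lemma good_C:
  assumes sc: "SC S' c b d E E'" and g: "good (insert c S') E"
  shows "good S' E'"
proof -
  note D = SC_D[OF sc]
  have cb: "E c b" using D(2,9) by auto
  have diff: "\<forall>x\<in>S'. \<forall>y\<in>S'. E x y \<noteq> E' x y \<longrightarrow> x \<in> component S' E' b"
  proof (intro ballI impI)
    fix x y assume x: "x \<in> S'" and y: "y \<in> S'" and ne: "E x y \<noteq> E' x y"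
    then have "x = b \<or> x = d" using sc unfolding SC_def by metis
    moreover have "reach S' E' b d" using reach_edge D(2,3,5) by metis
    ultimately show "x \<in> component S' E' b" unfolding component_def using D(2,3) by auto
  qed
  let ?C = "component S' E' b"
  have sub: "?C \<subseteq> S'" by (rule component_sub)
  have bC: "b \<in> ?C" using component_self D(2) by metis
  have dC: "d \<in> ?C" using reach_edge D(2,3,5) unfolding component_def by (metis (mono_tags, lifting) mem_Collect_eq)
  show ?thesis
  proof (rule rem_vertex_good[OF D(1,2) cb D(13,14) SC_reach[OF sc] diff _ g])
    assume "proper_interval (insert c ?C) E \<or> \<not> has_core (insert c ?C) E"
    then show "proper_interval ?C E' \<or> \<not> has_core ?C E'"
    proof
      assume "proper_interval (insert c ?C) E"
      then show ?thesis using PI_C[OF sc sub bC dC] by blast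
    next
      assume "\<not> has_core (insert c ?C) E"
      then show ?thesis using core_C[OF sc sub] by blast
    qed
  qed
qed

lemma good_P:
  assumes pp: "PP S' c d E E'" and deg: "\<forall>x\<in>S'. \<forall>y\<in>S'. E' d x \<longrightarrow> E' d y \<longrightarrow> x = y"
    and g: "good S' E'"
  shows "good (insert c S') E"
proof -
  note D = PP_D[OF pp]
  have cd: "E c d" using D(2,3) by auto
  have diff: "\<forall>x\<in>S'. \<forall>y\<in>S'. E x y \<noteq> E' x y \<longrightarrow> x \<in> component S' E' d"
    using D(5) by auto
  let ?C = "component S' E' d"
  have sub: "?C \<subseteq> S'" by (rule component_sub)
  have dC: "d \<in> ?C" using component_self D(2) by metis
  show ?thesis
  proof (rule add_vertex_good[OF D(1,2) cd D(6,7) PP_reach[OF pp] diff _ g])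
    assume "proper_interval ?C E' \<or> \<not> has_core ?C E'"
    then show "proper_interval (insert c ?C) E \<or> \<not> has_core (insert c ?C) E"
    proof
      assume "proper_interval ?C E'"
      moreover have "\<forall>x\<in>?C. \<forall>y\<in>?C. E' d x \<longrightarrow> E' d y \<longrightarrow> x = y" using deg sub by blast
      ultimately show ?thesis using PI_P[OF pp sub dC] by blast
    next
      assume "\<not> has_core ?C E'"
      then show ?thesis using core_P[OF pp sub] by blast
    qed
  qed
qed



lemma multigraph_symE:
  assumes "multigraph V m" shows "symE (\<lambda>x y. 0 < m x y)"
  using assms unfolding multigraph_def symE_def by auto

lemma reduce_eq:
  "x \<notin> Z \<Longrightarrow> y \<notin> Z \<Longrightarrow> reduce_mult m Z a b x y = m x y + (if (x = a \<and> y = b) \<or> (x = b \<and> y = a) then 1 else 0)"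
  "x \<in> Z \<Longrightarrow> reduce_mult m Z a b x y = 0"
  "y \<in> Z \<Longrightarrow> reduce_mult m Z a b x y = 0"
  unfolding reduce_mult_def by auto

lemma multigraph_reduce:
  assumes "multigraph V m" "a \<noteq> b" "a \<in> V - Z" "b \<in> V - Z"
  shows "multigraph (V - Z) (reduce_mult m Z a b)"
  using assms unfolding multigraph_def reduce_mult_def by auto

lemma core5:
  fixes m :: "'a \<Rightarrow> 'a \<Rightarrow> nat"
  assumes mg: "multigraph V m"
    and inV: "a \<in> V" "b \<in> V" "c \<in> V" "d \<in> V" "e \<in> V"
    and dist: "distinct [a, b, c, d, e]"
    and nb: "\<forall>u. 0 < m b u \<longrightarrow> u = a \<or> u = c"
    and nc: "\<forall>u. 0 < m c u \<longrightarrow> u = b \<or> u = d"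
    and nd: "\<forall>u. 0 < m d u \<longrightarrow> u = c \<or> u = e"
    and mcb: "m c b = 1" and mcd: "m c d = 1"
  shows "pitvd V m k \<longleftrightarrow> pitvd (V - {c}) (reduce_mult m {c} b d) k"
proof -
  define m' where "m' = reduce_mult m {c} b d"
  define E where "E = (\<lambda>x y. 0 < m x y)"
  define E' where "E' = (\<lambda>x y. 0 < m' x y)"
  have fin: "finite V" using mg unfolding multigraph_def by auto
  have symm: "\<And>x y. m x y = m y x" and m0: "\<And>x. m x x = 0" using mg unfolding multigraph_def by auto
  have mg': "multigraph (V - {c}) m'" unfolding m'_def
    by (rule multigraph_reduce[OF mg]) (use dist inV in auto)
  have sE: "symE E" unfolding E_def by (rule multigraph_symE[OF mg])
  have sE': "symE E'" unfolding E'_def by (rule multigraph_symE[OF mg'])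
  have dd: "a \<noteq> b" "a \<noteq> c" "a \<noteq> d" "a \<noteq> e" "b \<noteq> c" "b \<noteq> d" "b \<noteq> e" "c \<noteq> d" "c \<noteq> e" "d \<noteq> e"
    using dist by auto
  have mbd: "m b d = 0" "m d b = 0" using nb dd symm by (metis neq0_conv)+
  have meq: "\<And>x y. x \<noteq> c \<Longrightarrow> y \<noteq> c \<Longrightarrow> m' x y = m x y + (if (x = b \<and> y = d) \<or> (x = d \<and> y = b) then 1 else 0)"
    unfolding m'_def using reduce_eq(1)[of _ "{c}"] by simp
  have mc0: "\<And>y. m' c y = 0" "\<And>x. m' x c = 0" unfolding m'_def by (simp_all add: reduce_mult_def)
  have mcle: "\<And>y. m c y \<le> 1"
  proof -
    fix y show "m c y \<le> 1"
    proof (cases "0 < m c y")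
      case True then have "y = b \<or> y = d" using nc by auto
      then show ?thesis using mcb mcd by auto
    qed simp
  qed
  have Ec: "\<And>x. E c x \<longleftrightarrow> x = b \<or> x = d" unfolding E_def using nc mcb mcd by auto
  have Eb: "\<And>x. E b x \<Longrightarrow> x = a \<or> x = c" unfolding E_def using nb by auto
  have Ed: "\<And>x. E d x \<Longrightarrow> x = c \<or> x = e" unfolding E_def using nd by auto
  have EE': "\<And>x y. x \<noteq> c \<Longrightarrow> y \<noteq> c \<Longrightarrow> \<not> ((x = b \<and> y = d) \<or> (x = d \<and> y = b)) \<Longrightarrow> E' x y = E x y"
    unfolding E_def E'_def using meq by auto
  have E'bd: "E' b d" unfolding E'_def using meq dd by auto
  have nEbd: "\<not> E b d" unfolding E_def using mbd by auto
  have SCg: "\<And>X. b \<notin> X \<Longrightarrow> d \<notin> X \<Longrightarrow> c \<notin> X \<Longrightarrow> SC (V - {c} - X) c b d E E'"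
  proof -
    fix X assume X: "b \<notin> X" "d \<notin> X" "c \<notin> X"
    show "SC (V - {c} - X) c b d E E'"
      unfolding SC_def using X inV dd E'bd nEbd Ec sE sE' EE' by auto
  qed
  have eqL: "pitvd V m k \<longleftrightarrow> (\<exists>X\<subseteq>V. int (card X) \<le> k \<and> (\<forall>u\<in>V - X. \<forall>v\<in>V - X. m u v \<le> 1) \<and> good (V - X) E)"
    unfolding E_def by (rule pitvd_good[OF fin multigraph_symE[OF mg]])
  have eqR: "pitvd (V - {c}) m' k \<longleftrightarrow> (\<exists>X\<subseteq>V - {c}. int (card X) \<le> k \<and> (\<forall>u\<in>V - {c} - X. \<forall>v\<in>V - {c} - X. m' u v \<le> 1) \<and> good (V - {c} - X) E')"
    unfolding E'_def by (rule pitvd_good) (use fin multigraph_symE[OF mg'] in auto)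
  show ?thesis
    unfolding m'_def[symmetric] eqL eqR
  proof
    assume "\<exists>X\<subseteq>V. int (card X) \<le> k \<and> (\<forall>u\<in>V - X. \<forall>v\<in>V - X. m u v \<le> 1) \<and> good (V - X) E"
    then obtain X where X: "X \<subseteq> V" "int (card X) \<le> k" "\<forall>u\<in>V - X. \<forall>v\<in>V - X. m u v \<le> 1" "good (V - X) E"
      by blast
    have finX: "finite X" using X(1) fin finite_subset by auto
    show "\<exists>X\<subseteq>V - {c}. int (card X) \<le> k \<and> (\<forall>u\<in>V - {c} - X. \<forall>v\<in>V - {c} - X. m' u v \<le> 1) \<and> good (V - {c} - X) E'"
    proof (cases "c \<in> X")
      case True
      define X' where "X' = insert b (X - {c})"
      have "card X' \<le> Suc (card (X - {c}))" unfolding X'_def using finX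
        by (simp add: card_insert_if)
      moreover have "card (X - {c}) = card X - 1" using True finX by simp
      moreover have "card X \<ge> 1" using True finX by (metis One_nat_def Suc_leI card_gt_0_iff empty_iff)
      ultimately have cX': "card X' \<le> card X" by linarith
      have X'sub: "X' \<subseteq> V - {c}" unfolding X'_def using X(1) inV dd by auto
      have S1: "V - {c} - X' = V - X - {b}" unfolding X'_def using True by auto
      have agree: "\<forall>u\<in>V - {c} - X'. \<forall>v\<in>V - {c} - X'. m' u v = m u v"
        unfolding S1
      proof (intro ballI)
        fix u v assume u: "u \<in> V - X - {b}" and v: "v \<in> V - X - {b}"
        then have "u \<noteq> c" "v \<noteq> c" "u \<noteq> b" "v \<noteq> b" using True by auto
        then show "m' u v = m u v" using meq by simp
      qed
      have simple: "\<forall>u\<in>V - {c} - X'. \<forall>v\<in>V - {c} - X'. m' u v \<le> 1"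
        using agree X(3) unfolding S1 by auto
      have "good (V - {c} - X') E'"
        by (rule good_her[OF X(4)]) (use agree S1 in \<open>auto simp: E_def E'_def\<close>)
      then show ?thesis using X'sub cX' X(2) simple by (intro exI[of _ X']) auto
    next
      case False
      note cX = False
      have Xsub: "X \<subseteq> V - {c}" using X(1) False by auto
      show ?thesis
      proof (cases "b \<in> X \<or> d \<in> X")
        case True
        have agree: "\<forall>u\<in>V - {c} - X. \<forall>v\<in>V - {c} - X. m' u v = m u v"
          using meq True by auto
        have simple: "\<forall>u\<in>V - {c} - X. \<forall>v\<in>V - {c} - X. m' u v \<le> 1"
          using agree X(3) by auto
        have "good (V - {c} - X) E'"
          by (rule good_her[OF X(4)]) (use agree in \<open>auto simp: E_def E'_def\<close>)
        then show ?thesis using Xsub X(2) simple by (intro exI[of _ X]) auto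
      next
        case False
        have sc: "SC (V - {c} - X) c b d E E'" using SCg False cX by auto
        have ins: "insert c (V - {c} - X) = V - X" using inV cX by auto
        have "good (V - {c} - X) E'" by (rule good_C[OF sc]) (use X(4) ins in simp)
        moreover have "\<forall>u\<in>V - {c} - X. \<forall>v\<in>V - {c} - X. m' u v \<le> 1"
        proof (intro ballI)
          fix u v assume u: "u \<in> V - {c} - X" and v: "v \<in> V - {c} - X"
          show "m' u v \<le> 1"
          proof (cases "(u = b \<and> v = d) \<or> (u = d \<and> v = b)")
            case True then show ?thesis using meq mbd dd by auto
          next
            case False then show ?thesis using meq X(3) u v by auto
          qed
        qed
        ultimately show ?thesis using Xsub X(2) by (intro exI[of _ X]) auto
      qed
    qed
  next
    assume "\<exists>X\<subseteq>V - {c}. int (card X) \<le> k \<and> (\<forall>u\<in>V - {c} - X. \<forall>v\<in>V - {c} - X. m' u v \<le> 1) \<and> good (V - {c} - X) E'"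
    then obtain X where X: "X \<subseteq> V - {c}" "int (card X) \<le> k" "\<forall>u\<in>V - {c} - X. \<forall>v\<in>V - {c} - X. m' u v \<le> 1"
      "good (V - {c} - X) E'" by blast
    have Xsub: "X \<subseteq> V" using X(1) by auto
    have cX: "c \<notin> X" using X(1) by auto
    have ins: "insert c (V - {c} - X) = V - X" using inV cX by auto
    have simple: "\<forall>u\<in>V - X. \<forall>v\<in>V - X. m u v \<le> 1"
    proof (intro ballI)
      fix u v assume u: "u \<in> V - X" and v: "v \<in> V - X"
      show "m u v \<le> 1"
      proof (cases "u = c \<or> v = c")
        case True
        have "m u c = m c u" by (rule symm)
        then show ?thesis using True mcle[of v] mcle[of u] by auto
      next
        case False
        then have "u \<in> V - {c} - X" "v \<in> V - {c} - X" using u v by auto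
        then have "m' u v \<le> 1" using X(3) by auto
        then show ?thesis using meq False by (metis add_leE)
      qed
    qed
    have "good (V - X) E"
    proof (cases "b \<in> X")
      case False
      note bX = False
      show ?thesis
      proof (cases "d \<in> X")
        case False
        have sc: "SC (V - {c} - X) c b d E E'" using SCg False bX cX by auto
        have ncom: "\<forall>w\<in>V - {c} - X. w \<noteq> b \<longrightarrow> w \<noteq> d \<longrightarrow> \<not> (E' b w \<and> E' d w)"
        proof (intro ballI impI notI)
          fix w assume w: "w \<in> V - {c} - X" "w \<noteq> b" "w \<noteq> d" "E' b w \<and> E' d w"
          then have "E b w" "E d w" using EE' dd by auto
          then have "w = a" "w = e" using Eb Ed w by auto
          then show False using dd by auto
        qed
        show ?thesis using good_S[OF sc ncom X(4)] ins by simp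
      next
        case True
        have pp: "PP (V - {c} - X) c b E E'"
          unfolding PP_def using True bX cX inV Ec EE' sE sE' dd by auto
        have deg: "\<forall>x\<in>V - {c} - X. \<forall>y\<in>V - {c} - X. E' b x \<longrightarrow> E' b y \<longrightarrow> x = y"
        proof (intro ballI impI)
          fix x y assume x: "x \<in> V - {c} - X" and y: "y \<in> V - {c} - X" and ex: "E' b x" and ey: "E' b y"
          have "x \<noteq> d" "y \<noteq> d" using x y True by auto
          then have "E b x" "E b y" using EE' ex ey x y dd by auto
          then have "x = a \<or> x = c" "y = a \<or> y = c" using Eb by auto
          then show "x = y" using x y by auto
        qed
        show ?thesis using good_P[OF pp deg X(4)] ins by simp
      qed
    next
      case True
      note bX = True
      show ?thesis
      proof (cases "d \<in> X")
        case False
        have pp: "PP (V - {c} - X) c d E E'"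
          unfolding PP_def using False bX cX inV Ec EE' sE sE' dd by auto
        have deg: "\<forall>x\<in>V - {c} - X. \<forall>y\<in>V - {c} - X. E' d x \<longrightarrow> E' d y \<longrightarrow> x = y"
        proof (intro ballI impI)
          fix x y assume x: "x \<in> V - {c} - X" and y: "y \<in> V - {c} - X" and ex: "E' d x" and ey: "E' d y"
          have "x \<noteq> b" "y \<noteq> b" using x y True by auto
          then have "E d x" "E d y" using EE' ex ey x y dd by auto
          then have "x = c \<or> x = e" "y = c \<or> y = e" using Ed by auto
          then show "x = y" using x y by auto
        qed
        show ?thesis using good_P[OF pp deg X(4)] ins by simp
      next
        case True
        have "good (insert c (V - {c} - X)) E"
        proof (rule add_isolated_good[OF _ sE _ _ X(4)])
          show "c \<notin> V - {c} - X" by simp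
          show "\<forall>x\<in>V - {c} - X. \<not> E c x" using Ec True bX by auto
          show "\<forall>x\<in>V - {c} - X. \<forall>y\<in>V - {c} - X. E x y = E' x y" using EE' True bX by auto
        qed
        then show ?thesis using ins by simp
      qed
    qed
    then show "\<exists>X\<subseteq>V. int (card X) \<le> k \<and> (\<forall>u\<in>V - X. \<forall>v\<in>V - X. m u v \<le> 1) \<and> good (V - X) E"
      using Xsub X(2) simple by blast
  qed
qed



definition Qp :: "'a set \<Rightarrow> ('a \<Rightarrow> 'a \<Rightarrow> nat) \<Rightarrow> 'a list \<Rightarrow> bool" where
  "Qp V m P \<longleftrightarrow> multigraph V m \<and> distinct P \<and> set P \<subseteq> V \<and>
    (\<forall>i. 0 < i \<and> Suc i < length P \<longrightarrow> m (P ! i) (P ! (i - 1)) = 1 \<and> m (P ! i) (P ! Suc i) = 1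
        \<and> (\<forall>u. 0 < m (P ! i) u \<longrightarrow> u = P ! (i - 1) \<or> u = P ! Suc i))"

lemma sum_two:
  fixes f :: "'a \<Rightarrow> nat"
  assumes "finite V" "y \<in> V" "z \<in> V" "y \<noteq> z" "sum f V = 2" "f y \<ge> 1" "f z \<ge> 1"
  shows "f y = 1 \<and> f z = 1 \<and> (\<forall>u\<in>V. u \<noteq> y \<longrightarrow> u \<noteq> z \<longrightarrow> f u = 0)"
proof -
  have "sum f V = f y + sum f (V - {y})" using assms by (simp add: sum.remove)
  moreover have "sum f (V - {y}) = f z + sum f (V - {y} - {z})" using assms by (simp add: sum.remove)
  ultimately have s: "f y + f z + sum f (V - {y} - {z}) = 2" using assms(5) by simp
  then have "sum f (V - {y} - {z}) = 0" "f y = 1" "f z = 1" using assms(6,7) by linarith+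
  then show ?thesis using assms(1) by auto
qed

lemma deg2_Qp:
  assumes mg: "multigraph V m" and dp: "deg2_path V m P"
  shows "Qp V m P"
proof -
  have fin: "finite V" and symm: "\<And>x y. m x y = m y x" and supp: "\<And>u v. 0 < m u v \<Longrightarrow> u \<in> V \<and> v \<in> V"
    using mg unfolding multigraph_def by auto
  have dist: "distinct P" and sub: "set P \<subseteq> V"
    and ed: "\<And>i. Suc i < length P \<Longrightarrow> 0 < m (P ! i) (P ! Suc i)"
    and dg: "\<And>i. 0 < i \<Longrightarrow> Suc i < length P \<Longrightarrow> deg V m (P ! i) = 2"
    using dp unfolding deg2_path_def by auto
  have main: "\<And>i. 0 < i \<and> Suc i < length P \<Longrightarrow> m (P ! i) (P ! (i - 1)) = 1 \<and> m (P ! i) (P ! Suc i) = 1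
        \<and> (\<forall>u. 0 < m (P ! i) u \<longrightarrow> u = P ! (i - 1) \<or> u = P ! Suc i)"
  proof -
    fix i assume i: "0 < i \<and> Suc i < length P"
    let ?x = "P ! i" and ?y = "P ! (i - 1)" and ?z = "P ! Suc i"
    have "0 < m ?y (P ! Suc (i - 1))" using ed[of "i - 1"] i by simp
    then have e1: "0 < m ?x ?y" using i symm by simp
    have e2: "0 < m ?x ?z" using ed i by simp
    have "i - 1 \<noteq> Suc i" "i - 1 < length P" "Suc i < length P" using i by auto
    then have yz: "?y \<noteq> ?z" using dist nth_eq_iff_index_eq by metis
    have inV: "?y \<in> V" "?z \<in> V" using sub i by auto
    have "sum (m ?x) V = 2" using dg i unfolding deg_def by auto
    then have r: "m ?x ?y = 1 \<and> m ?x ?z = 1 \<and> (\<forall>u\<in>V. u \<noteq> ?y \<longrightarrow> u \<noteq> ?z \<longrightarrow> m ?x u = 0)"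
      using sum_two[OF fin inV yz] e1 e2 by simp
    have "\<forall>u. 0 < m ?x u \<longrightarrow> u = ?y \<or> u = ?z"
    proof (intro allI impI)
      fix u assume "0 < m ?x u"
      then have "u \<in> V" using supp by auto
      then show "u = ?y \<or> u = ?z" using r \<open>0 < m ?x u\<close> by auto
    qed
    then show "m ?x ?y = 1 \<and> m ?x ?z = 1 \<and> (\<forall>u. 0 < m ?x u \<longrightarrow> u = ?y \<or> u = ?z)" using r by auto
  qed
  show ?thesis unfolding Qp_def using mg dist sub main by blast
qed

definition ZP :: "'a list \<Rightarrow> 'a set" where
  "ZP P = {P ! i | i. 2 \<le> i \<and> i \<le> length P - 3}"

lemma base5:
  assumes q: "Qp V m P" and len: "length P = 5"
  shows "pitvd V m k \<longleftrightarrow> pitvd (V - ZP P) (reduce_mult m (ZP P) (P ! 1) (P ! (length P - 2))) k"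
proof -
  obtain a b c d e where P: "P = [a, b, c, d, e]" using len
    by (auto simp: length_Suc_conv numeral_eq_Suc)
  have Z: "ZP P = {c}" unfolding ZP_def P
  proof
    show "{[a, b, c, d, e] ! i |i. 2 \<le> i \<and> i \<le> length [a, b, c, d, e] - 3} \<subseteq> {c}"
      by auto
    show "{c} \<subseteq> {[a, b, c, d, e] ! i |i. 2 \<le> i \<and> i \<le> length [a, b, c, d, e] - 3}"
      by (auto intro!: exI[of _ 2])
  qed
  have mg: "multigraph V m" and dist: "distinct [a, b, c, d, e]" and sub: "set [a,b,c,d,e] \<subseteq> V"
    using q unfolding Qp_def P by auto
  have qi: "\<And>i. 0 < i \<Longrightarrow> Suc i < length P \<Longrightarrow> m (P ! i) (P ! (i - 1)) = 1 \<and> m (P ! i) (P ! Suc i) = 1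
        \<and> (\<forall>u. 0 < m (P ! i) u \<longrightarrow> u = P ! (i - 1) \<or> u = P ! Suc i)"
    using q unfolding Qp_def by blast
  have i1: "m b a = 1 \<and> m b c = 1 \<and> (\<forall>u. 0 < m b u \<longrightarrow> u = a \<or> u = c)"
    using qi[of 1] unfolding P by simp
  have i2: "m c b = 1 \<and> m c d = 1 \<and> (\<forall>u. 0 < m c u \<longrightarrow> u = b \<or> u = d)"
    using qi[of 2] unfolding P by (simp add: numeral_2_eq_2)
  have i3: "m d c = 1 \<and> m d e = 1 \<and> (\<forall>u. 0 < m d u \<longrightarrow> u = c \<or> u = e)"
    using qi[of 3] unfolding P by (simp add: numeral_3_eq_3)
  have "pitvd V m k \<longleftrightarrow> pitvd (V - {c}) (reduce_mult m {c} b d) k"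
    by (rule core5[OF mg _ _ _ _ _ dist]) (use sub i1 i2 i3 in auto)
  then show ?thesis using Z P by simp
qed



lemma step_case:
  assumes q: "Qp V m P" and len: "length P = Suc n" and n5: "5 \<le> n"
  shows "\<exists>V1 m1 P1. (pitvd V m k \<longleftrightarrow> pitvd V1 m1 k) \<and> Qp V1 m1 P1 \<and> length P1 = n
     \<and> V1 - ZP P1 = V - ZP P
     \<and> reduce_mult m1 (ZP P1) (P1 ! 1) (P1 ! (length P1 - 2)) = reduce_mult m (ZP P) (P ! 1) (P ! (length P - 2))"
proof -
  obtain a b c d e r where P: "P = a # b # c # d # e # r" using len n5
    by (cases P; simp; rename_tac a l; case_tac l; simp; rename_tac b l; case_tac l; simp;
        rename_tac c l; case_tac l; simp; rename_tac d l; case_tac l; simp)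
  have mg: "multigraph V m" and dist: "distinct P" and sub: "set P \<subseteq> V" using q unfolding Qp_def by auto
  have qi: "\<And>i. 0 < i \<Longrightarrow> Suc i < length P \<Longrightarrow> m (P ! i) (P ! (i - 1)) = 1 \<and> m (P ! i) (P ! Suc i) = 1
        \<and> (\<forall>u. 0 < m (P ! i) u \<longrightarrow> u = P ! (i - 1) \<or> u = P ! Suc i)"
    using q unfolding Qp_def by blast
  have dn: "\<And>i j. i < length P \<Longrightarrow> j < length P \<Longrightarrow> i \<noteq> j \<Longrightarrow> P ! i \<noteq> P ! j"
    using dist nth_eq_iff_index_eq by metis
  have i1: "m b a = 1 \<and> m b c = 1 \<and> (\<forall>u. 0 < m b u \<longrightarrow> u = a \<or> u = c)"
    using qi[of 1] len n5 unfolding P by simp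
  have i2: "m c b = 1 \<and> m c d = 1 \<and> (\<forall>u. 0 < m c u \<longrightarrow> u = b \<or> u = d)"
    using qi[of 2] len n5 unfolding P by (simp add: numeral_2_eq_2)
  have i3: "m d c = 1 \<and> m d e = 1 \<and> (\<forall>u. 0 < m d u \<longrightarrow> u = c \<or> u = e)"
    using qi[of 3] len n5 unfolding P by (simp add: numeral_3_eq_3)
  have distP: "distinct [a, b, c, d, e]" using dist unfolding P by auto
  have inV: "a \<in> V" "b \<in> V" "c \<in> V" "d \<in> V" "e \<in> V" using sub unfolding P by auto
  define m1 where "m1 = reduce_mult m {c} b d"
  define P1 where "P1 = a # b # d # e # r"
  have lenP1: "length P1 = n" using len unfolding P P1_def by simp
  have eq1: "pitvd V m k \<longleftrightarrow> pitvd (V - {c}) m1 k"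
    unfolding m1_def by (rule core5[OF mg inV distP]) (use i1 i2 i3 in auto)
  have nth1: "\<And>j. P1 ! j = (if j < 2 then P ! j else P ! Suc j)"
  proof -
    fix j show "P1 ! j = (if j < 2 then P ! j else P ! Suc j)"
      unfolding P P1_def by (cases j; simp; rename_tac j'; case_tac j'; simp)
  qed
  have cP: "c = P ! 2" "b = P ! 1" "d = P ! 3" "a = P ! 0" "e = P ! 4" unfolding P by (simp_all add: numeral_eq_Suc)
  have ZPP: "ZP P = insert c (ZP P1)"
  proof
    show "ZP P \<subseteq> insert c (ZP P1)"
    proof
      fix x assume "x \<in> ZP P"
      then obtain i where i: "x = P ! i" "2 \<le> i" "i \<le> length P - 3" unfolding ZP_def by auto
      show "x \<in> insert c (ZP P1)"
      proof (cases "i = 2")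
        case True then show ?thesis using i cP by simp
      next
        case False
        then have "P1 ! (i - 1) = x" "2 \<le> i - 1" "i - 1 \<le> length P1 - 3" using i nth1 lenP1 len by auto
        then show ?thesis unfolding ZP_def by blast
      qed
    qed
  next
    show "insert c (ZP P1) \<subseteq> ZP P"
    proof
      fix x assume "x \<in> insert c (ZP P1)"
      then show "x \<in> ZP P"
      proof
        assume "x = c" then show ?thesis unfolding ZP_def using cP len n5 by (intro CollectI exI[of _ 2]) auto
      next
        assume "x \<in> ZP P1"
        then obtain i where i: "x = P1 ! i" "2 \<le> i" "i \<le> length P1 - 3" unfolding ZP_def by auto
        then have "x = P ! Suc i" "2 \<le> Suc i" "Suc i \<le> length P - 3" using nth1 lenP1 len by auto
        then show ?thesis unfolding ZP_def by blast
      qed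
    qed
  qed
  have dZ: "d \<in> ZP P1" unfolding ZP_def using lenP1 n5 by (intro CollectI exI[of _ 2]) (auto simp: P1_def numeral_eq_Suc)
  have last1: "P1 ! (length P1 - 2) = P ! (length P - 2)"
  proof -
    have "\<not> n - 2 < 2" using n5 by simp
    then have "P1 ! (n - 2) = P ! Suc (n - 2)" using nth1[of "n - 2"] by simp
    moreover have "Suc (n - 2) = Suc n - 2" using n5 by simp
    ultimately show ?thesis using lenP1 len by simp
  qed
  have b1: "P1 ! 1 = b" unfolding P1_def by simp
  have cd': "c \<noteq> P ! (length P - 2)" using dn[of 2 "length P - 2"] cP len n5 by auto
  have bc: "b \<noteq> c" using distP by auto
  have eqR: "reduce_mult m1 (ZP P1) (P1 ! 1) (P1 ! (length P1 - 2)) = reduce_mult m (ZP P) (P ! 1) (P ! (length P - 2))"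
    unfolding last1 b1 ZPP m1_def cP(2)[symmetric]
    by (rule ext, rule ext) (use dZ cd' bc in \<open>auto simp: reduce_mult_def\<close>)
  have VZ: "V - {c} - ZP P1 = V - ZP P" using ZPP by auto
  have m1eq: "\<And>x y. m1 x y = (if x = c \<or> y = c then 0 else m x y + (if (x = b \<and> y = d) \<or> (x = d \<and> y = b) then 1 else 0))"
    unfolding m1_def reduce_mult_def by auto
  have mg1: "multigraph (V - {c}) m1" unfolding m1_def
    by (rule multigraph_reduce[OF mg]) (use distP inV in auto)
  have dist1: "distinct P1" using dist unfolding P P1_def by auto
  have sub1: "set P1 \<subseteq> V - {c}" using dist sub unfolding P P1_def by auto
  have mbd: "m b d = 0" "m d b = 0" using i1 i3 distP by (metis distinct_length_2_or_more neq0_conv list.set_intros nth_Cons_0)+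
  have int1: "\<And>i. 0 < i \<Longrightarrow> Suc i < length P1 \<Longrightarrow> m1 (P1 ! i) (P1 ! (i - 1)) = 1 \<and> m1 (P1 ! i) (P1 ! Suc i) = 1
        \<and> (\<forall>u. 0 < m1 (P1 ! i) u \<longrightarrow> u = P1 ! (i - 1) \<or> u = P1 ! Suc i)"
  proof -
    fix i assume i: "0 < i" "Suc i < length P1"
    consider "i = 1" | "i = 2" | "3 \<le> i" using i by linarith
    then show "m1 (P1 ! i) (P1 ! (i - 1)) = 1 \<and> m1 (P1 ! i) (P1 ! Suc i) = 1
        \<and> (\<forall>u. 0 < m1 (P1 ! i) u \<longrightarrow> u = P1 ! (i - 1) \<or> u = P1 ! Suc i)"
    proof cases
      case 1
      then show ?thesis unfolding P1_def using m1eq i1 mbd distP by auto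
    next
      case 2
      then show ?thesis unfolding P1_def using m1eq i3 mbd distP by (auto simp: numeral_2_eq_2)
    next
      case 3
      have ii: "0 < Suc i" "Suc (Suc i) < length P" using i len lenP1 by auto
      have q2: "m (P ! Suc i) (P ! i) = 1 \<and> m (P ! Suc i) (P ! Suc (Suc i)) = 1
        \<and> (\<forall>u. 0 < m (P ! Suc i) u \<longrightarrow> u = P ! i \<or> u = P ! Suc (Suc i))" using qi[OF ii] by simp
      have p1: "P1 ! i = P ! Suc i" "P1 ! (i - 1) = P ! i" "P1 ! Suc i = P ! Suc (Suc i)"
        using nth1 3 by auto
      have ne: "P ! Suc i \<noteq> c" "P ! Suc i \<noteq> b" "P ! Suc i \<noteq> d" "P ! i \<noteq> c" "P ! Suc (Suc i) \<noteq> c"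
        using dn[of "Suc i" 2] dn[of "Suc i" 1] dn[of "Suc i" 3] dn[of i 2] dn[of "Suc (Suc i)" 2] cP 3 ii by auto
      show ?thesis unfolding p1 using m1eq q2 ne by auto
    qed
  qed
  have "Qp (V - {c}) m1 P1" unfolding Qp_def using mg1 dist1 sub1 int1 by blast
  then show ?thesis using eq1 lenP1 VZ eqR by blast
qed

lemma mainQ:
  "\<And>V m P. Qp V m P \<Longrightarrow> length P = n \<Longrightarrow> 5 \<le> n \<Longrightarrow>
     (pitvd V m k \<longleftrightarrow> pitvd (V - ZP P) (reduce_mult m (ZP P) (P ! 1) (P ! (length P - 2))) k)"
proof (induction n rule: less_induct)
  case (less n)
  show ?case
  proof (cases "n = 5")
    case True then show ?thesis using base5 less by blast
  next
    case False
    then obtain n' where n': "n = Suc n'" "5 \<le> n'" using less by (cases n) auto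
    obtain V1 m1 P1 where s: "pitvd V m k \<longleftrightarrow> pitvd V1 m1 k" "Qp V1 m1 P1" "length P1 = n'"
      "V1 - ZP P1 = V - ZP P"
      "reduce_mult m1 (ZP P1) (P1 ! 1) (P1 ! (length P1 - 2)) = reduce_mult m (ZP P) (P ! 1) (P ! (length P - 2))"
      using step_case[OF less(2) _ n'(2), of k] less(3) n'(1) by blast
    have "pitvd V1 m1 k \<longleftrightarrow> pitvd (V1 - ZP P1) (reduce_mult m1 (ZP P1) (P1 ! 1) (P1 ! (length P1 - 2))) k"
      using less(1)[of n' V1 m1 P1] s n' by simp
    then show ?thesis using s by simp
  qed
qed


theorem lemma18:
  fixes V :: "'a set" and m :: "'a \<Rightarrow> 'a \<Rightarrow> nat" and k :: int and P :: "'a list"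
  assumes "multigraph V m"
    and "deg2_path V m P"
    and "\<not> deg2_tail V m P"
    and "length P \<ge> 5"
  shows "pitvd V m k \<longleftrightarrow>
    pitvd (V - {P ! i | i. 2 \<le> i \<and> i \<le> length P - 3})
          (reduce_mult m {P ! i | i. 2 \<le> i \<and> i \<le> length P - 3} (P ! 1) (P ! (length P - 2)))
          k"
proof -
  have q: "Qp V m P" by (rule deg2_Qp[OF assms(1,2)])
  show ?thesis using mainQ[OF q refl assms(4), of k] unfolding ZP_def by simp
qed

end
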